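(* Let $G$ be a finite group and $X$ a finite $G$-poset. For $n\ge1$, $X^{(n)}/G$ is contractible if and only if $X'/G$ is contractible. If $X$ satisfies property (B), then $X^{(n)}/G$ is contractible if and only if $X/G$ is contractible.
   Context: Finite posets are regarded as finite $T_0$ topological spaces whose open sets are the down-sets; "contractible" refers to this topology. A finite $G$-poset is a finite poset with a right action of $G$ by order-preserving maps. $Y'$ is the poset of non-empty chains of $Y$ ordered by inclusion, $Y^{(n)}$ the $n$-th iterated subdivision. $Y/G$ is the orbit poset: $\overline{y}\le\overline{z}$ iff some representatives satisfy $y_1\le z_1$. $X$ satisfies property (B) if whenever $\{v_0,\dots,v_n\}$ and $\{v_0^{g_0},\dots,v_n^{g_n}\}$ are both chains of $X$ with $g_i\in G$, there is $g\in G$ with $v_i^{g_i}=v_i^g$ for all $i$. *)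

theory Defs
  imports "HOL-Analysis.Analysis" "HOL-Library.FSet" "HOL-Algebra.Group"
begin

definition poset_topology :: "'b set \<Rightarrow> ('b \<Rightarrow> 'b \<Rightarrow> bool) \<Rightarrow> 'b topology" where
  "poset_topology P r = topology (\<lambda>U. U \<subseteq> P \<and> (\<forall>x\<in>U. \<forall>y\<in>P. r y x \<longrightarrow> y \<in> U))"

lemma istopology_downsets:
  "istopology (\<lambda>U. U \<subseteq> P \<and> (\<forall>x\<in>U. \<forall>y\<in>P. r y x \<longrightarrow> y \<in> U))"
  unfolding istopology_def by blast

definition finite_G_poset ::
  "('g, 'm) monoid_scheme \<Rightarrow> 'a set \<Rightarrow> ('a \<Rightarrow> 'a \<Rightarrow> bool) \<Rightarrow> ('a \<Rightarrow> 'g \<Rightarrow> 'a) \<Rightarrow> bool" where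
  "finite_G_poset G X leq act \<longleftrightarrow>
     group G \<and> finite (carrier G) \<and> finite X \<and>
     (\<forall>x\<in>X. leq x x) \<and>
     (\<forall>x\<in>X. \<forall>y\<in>X. leq x y \<and> leq y x \<longrightarrow> x = y) \<and>
     (\<forall>x\<in>X. \<forall>y\<in>X. \<forall>z\<in>X. leq x y \<and> leq y z \<longrightarrow> leq x z) \<and>
     (\<forall>x\<in>X. \<forall>g\<in>carrier G. act x g \<in> X) \<and>
     (\<forall>x\<in>X. act x \<one>\<^bsub>G\<^esub> = x) \<and>
     (\<forall>x\<in>X. \<forall>g\<in>carrier G. \<forall>h\<in>carrier G. act x (g \<otimes>\<^bsub>G\<^esub> h) = act (act x g) h) \<and>
     (\<forall>x\<in>X. \<forall>y\<in>X. \<forall>g\<in>carrier G. leq x y \<longrightarrow> leq (act x g) (act y g))"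

definition gorbit :: "('g, 'm) monoid_scheme \<Rightarrow> ('b \<Rightarrow> 'g \<Rightarrow> 'b) \<Rightarrow> 'b \<Rightarrow> 'b set" where
  "gorbit G act y = (\<lambda>g. act y g) ` carrier G"

definition orbit_le :: "('b \<Rightarrow> 'b \<Rightarrow> bool) \<Rightarrow> 'b set \<Rightarrow> 'b set \<Rightarrow> bool" where
  "orbit_le r O1 O2 \<longleftrightarrow> (\<exists>y\<in>O1. \<exists>z\<in>O2. r y z)"

definition orbit_space ::
  "('g, 'm) monoid_scheme \<Rightarrow> ('b \<Rightarrow> 'g \<Rightarrow> 'b) \<Rightarrow> 'b set \<Rightarrow> ('b \<Rightarrow> 'b \<Rightarrow> bool) \<Rightarrow> 'b set topology" where
  "orbit_space G act Y r = poset_topology (gorbit G act ` Y) (orbit_le r)"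

text \<open>Level 0 elements are Pt x (x in X); level n+1 elements are Chn c,
  c a non-empty chain of level n, ordered by inclusion.\<close>

datatype 'a sdv = Pt 'a | Chn "'a sdv fset"

fun sdle :: "('a \<Rightarrow> 'a \<Rightarrow> bool) \<Rightarrow> 'a sdv \<Rightarrow> 'a sdv \<Rightarrow> bool" where
  "sdle leq (Pt a) (Pt b) = leq a b"
| "sdle leq (Chn c) (Chn d) = (c |\<subseteq>| d)"
| "sdle leq _ _ = False"

primrec sdact :: "('a \<Rightarrow> 'g \<Rightarrow> 'a) \<Rightarrow> 'a sdv \<Rightarrow> 'g \<Rightarrow> 'a sdv" where
  "sdact act (Pt a) g = Pt (act a g)"
| "sdact act (Chn c) g = Chn (fimage (\<lambda>y. sdact act y g) c)"

fun sdiv :: "nat \<Rightarrow> 'a set \<Rightarrow> ('a \<Rightarrow> 'a \<Rightarrow> bool) \<Rightarrow> 'a sdv set" where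
  "sdiv 0 X leq = Pt ` X"
| "sdiv (Suc n) X leq =
     {Chn c | c. fset c \<noteq> {} \<and> fset c \<subseteq> sdiv n X leq \<and>
                 (\<forall>x\<in>fset c. \<forall>y\<in>fset c. sdle leq x y \<or> sdle leq y x)}"

definition propB ::
  "('g, 'm) monoid_scheme \<Rightarrow> 'a set \<Rightarrow> ('a \<Rightarrow> 'a \<Rightarrow> bool) \<Rightarrow> ('a \<Rightarrow> 'g \<Rightarrow> 'a) \<Rightarrow> bool" where
  "propB G X leq act \<longleftrightarrow>
     (\<forall>(n::nat) (v::nat \<Rightarrow> 'a) (gs::nat \<Rightarrow> 'g).
        (\<forall>i\<le>n. v i \<in> X \<and> gs i \<in> carrier G) \<and>
        (\<forall>i\<le>n. \<forall>j\<le>n. leq (v i) (v j) \<or> leq (v j) (v i)) \<and>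
        (\<forall>i\<le>n. \<forall>j\<le>n. leq (act (v i) (gs i)) (act (v j) (gs j)) \<or>
                        leq (act (v j) (gs j)) (act (v i) (gs i)))
        \<longrightarrow> (\<exists>g\<in>carrier G. \<forall>i\<le>n. act (v i) (gs i) = act (v i) g))"

end

theory Submission
  imports Defs "HOL-Algebra.Multiplicative_Group"
begin

definition po :: "'b set \<Rightarrow> ('b \<Rightarrow> 'b \<Rightarrow> bool) \<Rightarrow> bool" where
  "po S rl \<longleftrightarrow> (\<forall>x\<in>S. rl x x) \<and> (\<forall>x\<in>S. \<forall>y\<in>S. rl x y \<and> rl y x \<longrightarrow> x = y)
     \<and> (\<forall>x\<in>S. \<forall>y\<in>S. \<forall>z\<in>S. rl x y \<and> rl y z \<longrightarrow> rl x z)"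

lemma po_refl: "po S rl \<Longrightarrow> x \<in> S \<Longrightarrow> rl x x"
  unfolding po_def by blast
lemma po_antisym: "po S rl \<Longrightarrow> x \<in> S \<Longrightarrow> y \<in> S \<Longrightarrow> rl x y \<Longrightarrow> rl y x \<Longrightarrow> x = y"
  unfolding po_def by blast
lemma po_trans: "po S rl \<Longrightarrow> x \<in> S \<Longrightarrow> y \<in> S \<Longrightarrow> z \<in> S \<Longrightarrow> rl x y \<Longrightarrow> rl y z \<Longrightarrow> rl x z"
  unfolding po_def by blast

definition Rm :: "'b set \<Rightarrow> ('b \<Rightarrow> 'b \<Rightarrow> bool) \<Rightarrow> ('b \<Rightarrow> 'b) \<Rightarrow> ('b \<Rightarrow> 'b) \<Rightarrow> bool" where
  "Rm S rl f g \<longleftrightarrow> (\<forall>x\<in>S. f x \<in> S) \<and> (\<forall>x\<in>S. g x \<in> S)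
     \<and> (\<forall>x\<in>S. \<forall>y\<in>S. rl x y \<longrightarrow> rl (f x) (f y))
     \<and> (\<forall>x\<in>S. \<forall>y\<in>S. rl x y \<longrightarrow> rl (g x) (g y))
     \<and> (\<forall>x\<in>S. rl (f x) (g x))"

definition fence :: "'b set \<Rightarrow> ('b \<Rightarrow> 'b \<Rightarrow> bool) \<Rightarrow> ('b \<Rightarrow> 'b) \<Rightarrow> ('b \<Rightarrow> 'b) \<Rightarrow> bool" where
  "fence S rl = (\<lambda>f g. Rm S rl f g \<or> Rm S rl g f)\<^sup>*\<^sup>*"

definition ccontr :: "'b set \<Rightarrow> ('b \<Rightarrow> 'b \<Rightarrow> bool) \<Rightarrow> bool" where
  "ccontr S rl \<longleftrightarrow> S = {} \<or> (\<exists>c\<in>S. fence S rl id (\<lambda>_. c))"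

lemma fence_refl: "fence S rl f f"
  by (simp add: fence_def)

lemma fence_step: "Rm S rl f g \<Longrightarrow> fence S rl f g"
  by (simp add: fence_def r_into_rtranclp)

lemma fence_step': "Rm S rl g f \<Longrightarrow> fence S rl f g"
  by (simp add: fence_def r_into_rtranclp)

lemma fence_trans: "fence S rl f g \<Longrightarrow> fence S rl g h \<Longrightarrow> fence S rl f h"
  unfolding fence_def by (rule rtranclp_trans)

lemma fence_sym: "fence S rl f g \<Longrightarrow> fence S rl g f"
  unfolding fence_def
proof (induction rule: rtranclp_induct)
  case base then show ?case by simp
next
  case (step y z)
  then show ?case by (metis (mono_tags, lifting) converse_rtranclp_into_rtranclp)
qed

lemma fence_pre:
  assumes S0: "S0 \<subseteq> S" and r: "\<forall>x\<in>S. r x \<in> S0" and rm: "\<forall>x\<in>S. \<forall>y\<in>S. rl x y \<longrightarrow> rl (r x) (r y)"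
    and "fence S0 rl f g"
  shows "fence S rl (f \<circ> r) (g \<circ> r)"
  using assms(4) unfolding fence_def
proof (induction rule: rtranclp_induct)
  case base then show ?case by simp
next
  case (step y z)
  have "Rm S rl (y \<circ> r) (z \<circ> r) \<or> Rm S rl (z \<circ> r) (y \<circ> r)"
  proof -
    have T: "Rm S rl (a \<circ> r) (b \<circ> r)" if "Rm S0 rl a b" for a b
      using that S0 r rm unfolding Rm_def by (auto simp: subset_iff)
    show ?thesis using step(2) T by blast
  qed
  then show ?case using step(3) by (metis (mono_tags, lifting) rtranclp.rtrancl_into_rtrancl)
qed

lemma fence_post:
  assumes S0: "S0 \<subseteq> S" and r: "\<forall>x\<in>S. r x \<in> S0" and rm: "\<forall>x\<in>S. \<forall>y\<in>S. rl x y \<longrightarrow> rl (r x) (r y)"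
    and "fence S rl f g"
  shows "fence S0 rl (r \<circ> f) (r \<circ> g)"
  using assms(4) unfolding fence_def
proof (induction rule: rtranclp_induct)
  case base then show ?case by simp
next
  case (step y z)
  have "Rm S0 rl (r \<circ> y) (r \<circ> z) \<or> Rm S0 rl (r \<circ> z) (r \<circ> y)"
  proof -
    have T: "Rm S0 rl (r \<circ> a) (r \<circ> b)" if "Rm S rl a b" for a b
      using that S0 r rm unfolding Rm_def by (auto simp: subset_iff)
    show ?thesis using step(2) T by blast
  qed
  then show ?case using step(3) by (metis (mono_tags, lifting) rtranclp.rtrancl_into_rtrancl)
qed

lemma retract_ccontr1:
  assumes po: "po S rl" and S0: "S0 \<subseteq> S" and r: "\<forall>x\<in>S. r x \<in> S0"
    and rm: "\<forall>x\<in>S. \<forall>y\<in>S. rl x y \<longrightarrow> rl (r x) (r y)" and rid: "\<forall>x\<in>S0. r x = x"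
    and "ccontr S rl"
  shows "ccontr S0 rl"
proof (cases "S = {}")
  case True then show ?thesis using S0 by (simp add: ccontr_def)
next
  case False
  then obtain c where c: "c \<in> S" "fence S rl id (\<lambda>_. c)" using assms(6) by (auto simp: ccontr_def)
  have 1: "fence S0 rl (r \<circ> id) (r \<circ> (\<lambda>_. c))" by (rule fence_post[OF S0 r rm c(2)])
  have 2: "Rm S0 rl id r" unfolding Rm_def
  proof (intro conjI ballI impI)
    fix x assume "x \<in> S0" then show "id x \<in> S0" "r x \<in> S0" "rl (id x) (r x)"
      using rid po_refl[OF po] S0 by auto
  next
    fix x y assume "x \<in> S0" "y \<in> S0" "rl x y"
    then show "rl (id x) (id y)" "rl (r x) (r y)" using rid by auto
  qed
  have "fence S0 rl id (\<lambda>_. r c)"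
    using fence_trans[OF fence_step[OF 2]] 1 by (simp add: o_def)
  then show ?thesis using c r by (auto simp: ccontr_def)
qed

lemma retract_ccontr2:
  assumes S0: "S0 \<subseteq> S" and r: "\<forall>x\<in>S. r x \<in> S0"
    and rm: "\<forall>x\<in>S. \<forall>y\<in>S. rl x y \<longrightarrow> rl (r x) (r y)"
    and fr: "fence S rl id r"
    and "ccontr S0 rl"
  shows "ccontr S rl"
proof (cases "S0 = {}")
  case True then have "S = {}" using r by auto
  then show ?thesis by (simp add: ccontr_def)
next
  case False
  then obtain c where c: "c \<in> S0" "fence S0 rl id (\<lambda>_. c)" using assms(5) by (auto simp: ccontr_def)
  have 1: "fence S rl (id \<circ> r) ((\<lambda>_. c) \<circ> r)" by (rule fence_pre[OF S0 r rm c(2)])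
  have "fence S rl id (\<lambda>_. c)" using fence_trans[OF fr] 1 by (simp add: o_def)
  then show ?thesis using c S0 by (auto simp: ccontr_def)
qed

lemma ccontr_triv:
  assumes po: "po S rl" and "\<forall>a\<in>S. \<forall>b\<in>S. a = b"
  shows "ccontr S rl"
proof (cases "S = {}")
  case True then show ?thesis by (simp add: ccontr_def)
next
  case False
  then obtain c where c: "c \<in> S" by auto
  have "Rm S rl id (\<lambda>_. c)" using assms(2) c po_refl[OF po c(1)] unfolding Rm_def by auto
  then show ?thesis using c fence_step unfolding ccontr_def by blast
qed

definition beat :: "'b set \<Rightarrow> ('b \<Rightarrow> 'b \<Rightarrow> bool) \<Rightarrow> 'b \<Rightarrow> 'b \<Rightarrow> bool" where
  "beat S rl x y \<longleftrightarrow> x \<in> S \<and> y \<in> S \<and> y \<noteq> x \<and>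
     ((rl y x \<and> (\<forall>z\<in>S. z \<noteq> x \<and> rl z x \<longrightarrow> rl z y)) \<or>
      (rl x y \<and> (\<forall>z\<in>S. z \<noteq> x \<and> rl x z \<longrightarrow> rl y z)))"

lemma po_dual: "po S rl \<Longrightarrow> po S (\<lambda>a b. rl b a)"
  unfolding po_def by blast

lemma beat_dual: "beat S (\<lambda>a b. rl b a) x y \<longleftrightarrow> beat S rl x y"
  unfolding beat_def by blast

lemma stong_le:
  assumes po: "po S rl" and fin: "finite S" and nb: "\<not> (\<exists>x y. beat S rl x y)"
    and fS: "\<forall>x\<in>S. f x \<in> S" and fm: "\<forall>x\<in>S. \<forall>y\<in>S. rl x y \<longrightarrow> rl (f x) (f y)"
    and fl: "\<forall>x\<in>S. rl (f x) x"
  shows "\<forall>x\<in>S. f x = x"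
proof -
  define cd where "cd = (\<lambda>x. card {y\<in>S. rl y x \<and> y \<noteq> x})"
  have "\<forall>x. cd x = n \<longrightarrow> x \<in> S \<longrightarrow> f x = x" for n
  proof (induction n rule: less_induct)
    case (less n)
    show ?case
    proof (intro allI impI)
    fix x assume cdx: "cd x = n" and xS: "x \<in> S"
      show "f x = x"
      proof (rule ccontr)
        assume ne: "f x \<noteq> x"
        have "beat S rl x (f x)"
          unfolding beat_def
        proof (intro conjI disjI1 ballI impI)
          show "x \<in> S" "f x \<in> S" "f x \<noteq> x" "rl (f x) x" using xS fS ne fl by auto
        next
          fix z assume zS: "z \<in> S" and zx: "z \<noteq> x \<and> rl z x"
          have sub1: "{y\<in>S. rl y z \<and> y \<noteq> z} \<subseteq> {y\<in>S. rl y x \<and> y \<noteq> x}"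
          proof
            fix y assume "y \<in> {y\<in>S. rl y z \<and> y \<noteq> z}"
            then have y: "y \<in> S" "rl y z" "y \<noteq> z" by auto
            have "rl y x" using po_trans[OF po y(1) zS xS y(2)] zx by blast
            moreover have "y \<noteq> x"
            proof
              assume "y = x"
              then have "z = x" using po_antisym[OF po zS xS] zx y(2) by blast
              then show False using zx by blast
            qed
            ultimately show "y \<in> {y\<in>S. rl y x \<and> y \<noteq> x}" using y by blast
          qed
          have zin: "z \<in> {y\<in>S. rl y x \<and> y \<noteq> x}" "z \<notin> {y\<in>S. rl y z \<and> y \<noteq> z}"
            using zS zx by auto
          have sub: "{y\<in>S. rl y z \<and> y \<noteq> z} \<subset> {y\<in>S. rl y x \<and> y \<noteq> x}"
            using sub1 zin by blast
          have "card {y\<in>S. rl y z \<and> y \<noteq> z} < card {y\<in>S. rl y x \<and> y \<noteq> x}"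
            using psubset_card_mono[OF _ sub] fin by simp
          then have "z \<in> S \<longrightarrow> f z = z" using less cdx unfolding cd_def by blast
          then have "f z = z" using zS by simp
          moreover have "rl (f z) (f x)" using fm zS xS zx by blast
          ultimately show "rl z (f x)" by simp
        qed
        then show False using nb by blast
      qed
    qed
  qed
  then show ?thesis by blast
qed

lemma stong_ge:
  assumes po: "po S rl" and fin: "finite S" and nb: "\<not> (\<exists>x y. beat S rl x y)"
    and fS: "\<forall>x\<in>S. f x \<in> S" and fm: "\<forall>x\<in>S. \<forall>y\<in>S. rl x y \<longrightarrow> rl (f x) (f y)"
    and fl: "\<forall>x\<in>S. rl x (f x)"
  shows "\<forall>x\<in>S. f x = x"
proof -
  have nb': "\<not> (\<exists>x y. beat S (\<lambda>a b. rl b a) x y)" using nb beat_dual[of S rl] by blast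
  show ?thesis by (rule stong_le[OF po_dual[OF po] fin nb' fS]) (use fm fl in auto)
qed

lemma minimal_ccontr:
  assumes po: "po S rl" and fin: "finite S" and nb: "\<not> (\<exists>x y. beat S rl x y)"
    and cc: "ccontr S rl"
  shows "\<forall>a\<in>S. \<forall>b\<in>S. a = b"
proof (cases "S = {}")
  case True then show ?thesis by simp
next
  case False
  then obtain c where c: "c \<in> S" "fence S rl id (\<lambda>_. c)" using cc by (auto simp: ccontr_def)
  have "\<forall>x\<in>S. g x = x" if "fence S rl id g" for g
    using that unfolding fence_def
  proof (induction rule: rtranclp_induct)
    case base then show ?case by simp
  next
    case (step f g)
    from step(2) show ?case
    proof
      assume R: "Rm S rl f g"
      show ?thesis by (rule stong_ge[OF po fin nb]) (use R step(3) in \<open>auto simp: Rm_def\<close>)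
    next
      assume R: "Rm S rl g f"
      show ?thesis by (rule stong_le[OF po fin nb]) (use R step(3) in \<open>auto simp: Rm_def\<close>)
    qed
  qed
  from this[OF c(2)] show ?thesis by metis
qed

lemma po_sub: "po S rl \<Longrightarrow> S0 \<subseteq> S \<Longrightarrow> po S0 rl"
  unfolding po_def by blast

lemma beat_cmp:
  assumes po: "po S rl" and b: "beat S rl x y" and zS: "z \<in> S" and zx: "z \<noteq> x"
    and c: "rl z x \<or> rl x z"
  shows "rl z y \<or> rl y z"
proof -
  have xS: "x \<in> S" and yS: "y \<in> S" using b by (auto simp: beat_def)
  from b have "(rl y x \<and> (\<forall>z\<in>S. z \<noteq> x \<and> rl z x \<longrightarrow> rl z y)) \<or>
      (rl x y \<and> (\<forall>z\<in>S. z \<noteq> x \<and> rl x z \<longrightarrow> rl y z))" by (simp add: beat_def)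
  then show ?thesis
  proof
    assume h: "rl y x \<and> (\<forall>z\<in>S. z \<noteq> x \<and> rl z x \<longrightarrow> rl z y)"
    show ?thesis using c
    proof
      assume "rl z x" then show ?thesis using h zS zx by blast
    next
      assume "rl x z" then have "rl y z" using po_trans[OF po yS xS zS] h by blast
      then show ?thesis by blast
    qed
  next
    assume h: "rl x y \<and> (\<forall>z\<in>S. z \<noteq> x \<and> rl x z \<longrightarrow> rl y z)"
    show ?thesis using c
    proof
      assume "rl x z" then show ?thesis using h zS zx by blast
    next
      assume "rl z x" then have "rl z y" using po_trans[OF po zS xS yS] h by blast
      then show ?thesis by blast
    qed
  qed
qed

definition rb :: "'b \<Rightarrow> 'b \<Rightarrow> 'b \<Rightarrow> 'b" where
  "rb x y = (\<lambda>z. if z = x then y else z)"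

lemma beat_retract:
  assumes po: "po S rl" and b: "beat S rl x y"
  shows "\<forall>z\<in>S. rb x y z \<in> S - {x}"
    and "\<forall>a\<in>S. \<forall>c\<in>S. rl a c \<longrightarrow> rl (rb x y a) (rb x y c)"
    and "fence S rl id (rb x y)"
    and "\<forall>z\<in>S - {x}. rb x y z = z"
proof -
  have xS: "x \<in> S" and yS: "y \<in> S" and yx: "y \<noteq> x" using b by (auto simp: beat_def)
  show "\<forall>z\<in>S. rb x y z \<in> S - {x}" using yS yx by (auto simp: rb_def)
  show "\<forall>z\<in>S - {x}. rb x y z = z" by (auto simp: rb_def)
  from b have cases: "(rl y x \<and> (\<forall>z\<in>S. z \<noteq> x \<and> rl z x \<longrightarrow> rl z y)) \<or>
      (rl x y \<and> (\<forall>z\<in>S. z \<noteq> x \<and> rl x z \<longrightarrow> rl y z))" by (simp add: beat_def)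
  show mono: "\<forall>a\<in>S. \<forall>c\<in>S. rl a c \<longrightarrow> rl (rb x y a) (rb x y c)"
  proof (intro ballI impI)
    fix a c assume aS: "a \<in> S" and cS: "c \<in> S" and ac: "rl a c"
    show "rl (rb x y a) (rb x y c)"
    proof (cases "a = x")
      case True
      show ?thesis
      proof (cases "c = x")
        case True then show ?thesis using \<open>a = x\<close> po_refl[OF po yS] by (simp add: rb_def)
      next
        case False
        have "rl y c" using cases
        proof
          assume "rl y x \<and> (\<forall>z\<in>S. z \<noteq> x \<and> rl z x \<longrightarrow> rl z y)"
          then show ?thesis using po_trans[OF po yS xS cS] ac \<open>a = x\<close> by blast
        next
          assume "rl x y \<and> (\<forall>z\<in>S. z \<noteq> x \<and> rl x z \<longrightarrow> rl y z)"
          then show ?thesis using cS False ac \<open>a = x\<close> by blast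
        qed
        then show ?thesis using True False by (simp add: rb_def)
      qed
    next
      case False
      show ?thesis
      proof (cases "c = x")
        case True
        have "rl a y" using cases
        proof
          assume "rl y x \<and> (\<forall>z\<in>S. z \<noteq> x \<and> rl z x \<longrightarrow> rl z y)"
          then show ?thesis using aS False ac \<open>c = x\<close> by blast
        next
          assume "rl x y \<and> (\<forall>z\<in>S. z \<noteq> x \<and> rl x z \<longrightarrow> rl y z)"
          then show ?thesis using po_trans[OF po aS xS yS] ac \<open>c = x\<close> by blast
        qed
        then show ?thesis using True False by (simp add: rb_def)
      next
        case False
        then show ?thesis using \<open>a \<noteq> x\<close> ac by (simp add: rb_def)
      qed
    qed
  qed
  have idm: "\<forall>a\<in>S. \<forall>c\<in>S. rl a c \<longrightarrow> rl (id a) (id c)" by simp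
  have rS: "\<forall>z\<in>S. rb x y z \<in> S" using yS by (auto simp: rb_def)
  show "fence S rl id (rb x y)" using cases
  proof
    assume "rl y x \<and> (\<forall>z\<in>S. z \<noteq> x \<and> rl z x \<longrightarrow> rl z y)"
    then have "\<forall>z\<in>S. rl (rb x y z) (id z)" using po_refl[OF po] by (auto simp: rb_def)
    then have "Rm S rl (rb x y) id" using rS mono idm unfolding Rm_def by auto
    then show ?thesis by (rule fence_step')
  next
    assume "rl x y \<and> (\<forall>z\<in>S. z \<noteq> x \<and> rl x z \<longrightarrow> rl y z)"
    then have "\<forall>z\<in>S. rl (id z) (rb x y z)" using po_refl[OF po] by (auto simp: rb_def)
    then have "Rm S rl id (rb x y)" using rS mono idm unfolding Rm_def by auto
    then show ?thesis by (rule fence_step)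
  qed
qed

definition chs :: "'b set \<Rightarrow> ('b \<Rightarrow> 'b \<Rightarrow> bool) \<Rightarrow> 'b set set" where
  "chs S rl = {c. c \<noteq> {} \<and> c \<subseteq> S \<and> (\<forall>a\<in>c. \<forall>b\<in>c. rl a b \<or> rl b a)}"

lemma chs_cmp: "c \<in> chs S rl \<Longrightarrow> a \<in> c \<Longrightarrow> b \<in> c \<Longrightarrow> rl a b \<or> rl b a"
  unfolding chs_def by blast

lemma po_chs: "po (chs S rl) (\<subseteq>)"
  unfolding po_def by blast

lemma finite_chs: "finite S \<Longrightarrow> finite (chs S rl)"
  by (rule finite_subset[of _ "Pow S"]) (auto simp: chs_def)

lemma chs_sub: "S0 \<subseteq> S \<Longrightarrow> chs S0 rl \<subseteq> chs S rl"
  unfolding chs_def by blast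

definition Rc :: "'b \<Rightarrow> 'b \<Rightarrow> 'b set \<Rightarrow> 'b set" where
  "Rc x y = (\<lambda>c. if x \<in> c then insert y (c - {x}) else c)"

definition Sc :: "'b \<Rightarrow> 'b \<Rightarrow> 'b set \<Rightarrow> 'b set" where
  "Sc x y = (\<lambda>c. if x \<in> c then insert y c else c)"

lemma chain_retract:
  assumes po: "po S rl" and b: "beat S rl x y"
  shows "\<forall>c\<in>chs S rl. Rc x y c \<in> chs (S - {x}) rl"
    and "\<forall>a\<in>chs S rl. \<forall>c\<in>chs S rl. a \<subseteq> c \<longrightarrow> Rc x y a \<subseteq> Rc x y c"
    and "fence (chs S rl) (\<subseteq>) id (Rc x y)"
    and "\<forall>c\<in>chs (S - {x}) rl. Rc x y c = c"
proof -
  have xS: "x \<in> S" and yS: "y \<in> S" and yx: "y \<noteq> x" using b by (auto simp: beat_def)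
  have cxy: "rl x y \<or> rl y x" using b by (auto simp: beat_def)
  have Sc_chs: "Sc x y c \<in> chs S rl" if c: "c \<in> chs S rl" for c
  proof (cases "x \<in> c")
    case False then show ?thesis using c by (simp add: Sc_def)
  next
    case True
    have cS: "c \<subseteq> S" and cc: "\<forall>a\<in>c. \<forall>b\<in>c. rl a b \<or> rl b a" using c by (auto simp: chs_def)
    have ycmp: "rl a y \<or> rl y a" if "a \<in> c" for a
    proof (cases "a = x")
      case True then show ?thesis using cxy by blast
    next
      case False
      show ?thesis by (rule beat_cmp[OF po b]) (use that cS cc True False in auto)
    qed
    show ?thesis using True cS cc ycmp yS po_refl[OF po yS] unfolding chs_def Sc_def by auto
  qed
  show R1: "\<forall>c\<in>chs S rl. Rc x y c \<in> chs (S - {x}) rl"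
  proof
    fix c assume c: "c \<in> chs S rl"
    show "Rc x y c \<in> chs (S - {x}) rl"
    proof (cases "x \<in> c")
      case False then show ?thesis using c by (auto simp: Rc_def chs_def)
    next
      case True
      have "Sc x y c \<in> chs S rl" by (rule Sc_chs[OF c])
      then have "insert y c \<in> chs S rl" using True by (simp add: Sc_def)
      then show ?thesis using True yx unfolding Rc_def chs_def by auto
    qed
  qed
  show R2: "\<forall>a\<in>chs S rl. \<forall>c\<in>chs S rl. a \<subseteq> c \<longrightarrow> Rc x y a \<subseteq> Rc x y c"
    unfolding Rc_def by auto
  show "\<forall>c\<in>chs (S - {x}) rl. Rc x y c = c" unfolding Rc_def chs_def by auto
  have S2: "\<forall>a\<in>chs S rl. \<forall>c\<in>chs S rl. a \<subseteq> c \<longrightarrow> Sc x y a \<subseteq> Sc x y c"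
    unfolding Sc_def by auto
  have RS: "\<forall>c\<in>chs S rl. Rc x y c \<in> chs S rl"
    using R1 chs_sub[of "S - {x}" S rl] by blast
  have "Rm (chs S rl) (\<subseteq>) id (Sc x y)"
    unfolding Rm_def using Sc_chs S2 by (auto simp: Sc_def)
  moreover have "Rm (chs S rl) (\<subseteq>) (Rc x y) (Sc x y)"
    unfolding Rm_def using Sc_chs S2 RS R2 by (auto simp: Sc_def Rc_def)
  ultimately show "fence (chs S rl) (\<subseteq>) id (Rc x y)"
    using fence_trans[OF fence_step fence_step'] by blast
qed

lemma finite_maximal:
  assumes "finite A" "A \<noteq> {}" "A \<subseteq> S" and po: "po S rl"
  shows "\<exists>w\<in>A. \<forall>w'\<in>A. rl w w' \<longrightarrow> w' = w"
  using assms(1,2,3)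
proof (induction A rule: finite_ne_induct)
  case (singleton x) then show ?case by blast
next
  case (insert a A)
  then obtain w where w: "w \<in> A" "\<forall>w'\<in>A. rl w w' \<longrightarrow> w' = w" by auto
  have aS: "a \<in> S" and wS: "w \<in> S" and AS: "A \<subseteq> S" using insert w by auto
  show ?case
  proof (cases "rl w a")
    case True
    have "\<forall>w'\<in>insert a A. rl a w' \<longrightarrow> w' = a"
    proof (intro ballI impI)
      fix w' assume w': "w' \<in> insert a A" "rl a w'"
      show "w' = a"
      proof (cases "w' = a")
        case False
        then have w'A: "w' \<in> A" using w' by auto
        then have w'S: "w' \<in> S" using AS by blast
        have "rl w w'" using po_trans[OF po wS aS w'S True] w' by blast
        then have "w' = w" using w w'A by blast
        then show ?thesis using po_antisym[OF po wS aS] True w' by blast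
      qed simp
    qed
    then show ?thesis by blast
  next
    case False
    then show ?thesis using w by auto
  qed
qed

lemma dom_beat_up:
  assumes po: "po S rl" and fin: "finite S" and vS: "v \<in> S" and uS: "u \<in> S" and uv: "u \<noteq> v"
    and vu: "rl v u"
    and dom: "\<forall>z\<in>S. (rl z v \<or> rl v z) \<longrightarrow> (rl z u \<or> rl u z)"
  shows "\<exists>x y. beat S rl x y"
proof -
  define A where "A = {w\<in>S. rl v w \<and> w \<noteq> v \<and> rl w u \<and> w \<noteq> u}"
  show ?thesis
  proof (cases "A = {}")
    case True
    have "beat S rl v u" unfolding beat_def
    proof (intro conjI disjI2 ballI impI)
      show "v \<in> S" "u \<in> S" "u \<noteq> v" "rl v u" using vS uS uv vu by auto
    next
      fix z assume zS: "z \<in> S" and zv: "z \<noteq> v \<and> rl v z"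
      have "rl z u \<or> rl u z" using dom zS zv by blast
      then show "rl u z"
      proof
        assume zu: "rl z u"
        show ?thesis
        proof (cases "z = u")
          case True then show ?thesis using po_refl[OF po uS] by simp
        next
          case False
          then have "z \<in> A" using zS zv zu by (auto simp: A_def)
          then show ?thesis using \<open>A = {}\<close> by blast
        qed
      qed
    qed
    then show ?thesis by blast
  next
    case False
    have "A \<subseteq> S" "finite A" using fin by (auto simp: A_def)
    then obtain w where wA: "w \<in> A" and wmax: "\<forall>w'\<in>A. rl w w' \<longrightarrow> w' = w"
      using finite_maximal[OF _ False _ po] by blast
    have wS: "w \<in> S" and vw: "rl v w" "w \<noteq> v" and wu: "rl w u" "w \<noteq> u" using wA by (auto simp: A_def)
    have "beat S rl w u" unfolding beat_def
    proof (intro conjI disjI2 ballI impI)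
      show "w \<in> S" "u \<in> S" "u \<noteq> w" "rl w u" using wS uS wu by auto
    next
      fix z assume zS: "z \<in> S" and zw: "z \<noteq> w \<and> rl w z"
      have vz: "rl v z" using po_trans[OF po vS wS zS] vw zw by blast
      have zv: "z \<noteq> v"
      proof
        assume "z = v"
        then have "w = v" using po_antisym[OF po wS vS] zw vw by blast
        then show False using vw by blast
      qed
      have "rl z u \<or> rl u z" using dom zS vz by blast
      then show "rl u z"
      proof
        assume zu: "rl z u"
        show ?thesis
        proof (cases "z = u")
          case True then show ?thesis using po_refl[OF po uS] by simp
        next
          case False
          then have "z \<in> A" using zS zv vz zu by (auto simp: A_def)
          then have "z = w" using wmax zw by blast
          then show ?thesis using zw by blast
        qed
      qed
    qed
    then show ?thesis by blast
  qed
qed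

lemma dom_beat:
  assumes po: "po S rl" and fin: "finite S" and vS: "v \<in> S" and uS: "u \<in> S" and uv: "u \<noteq> v"
    and dom: "\<forall>z\<in>S. (rl z v \<or> rl v z) \<longrightarrow> (rl z u \<or> rl u z)"
  shows "\<exists>x y. beat S rl x y"
proof -
  have "rl v u \<or> rl u v" using dom vS po_refl[OF po vS] by blast
  then show ?thesis
  proof
    assume "rl v u" then show ?thesis using dom_beat_up[OF po fin vS uS uv _ dom] by blast
  next
    assume "rl u v"
    have dom': "\<forall>z\<in>S. ((\<lambda>a b. rl b a) z v \<or> (\<lambda>a b. rl b a) v z) \<longrightarrow> ((\<lambda>a b. rl b a) z u \<or> (\<lambda>a b. rl b a) u z)"
      using dom by blast
    obtain x y where "beat S (\<lambda>a b. rl b a) x y"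
      using dom_beat_up[OF po_dual[OF po] fin vS uS uv _ dom'] \<open>rl u v\<close> by blast
    then show ?thesis using beat_dual[of S rl] by blast
  qed
qed

lemma Rm_f: "Rm S rl f g \<Longrightarrow> x \<in> S \<Longrightarrow> f x \<in> S" unfolding Rm_def by blast
lemma Rm_g: "Rm S rl f g \<Longrightarrow> x \<in> S \<Longrightarrow> g x \<in> S" unfolding Rm_def by blast
lemma Rm_fm: "Rm S rl f g \<Longrightarrow> x \<in> S \<Longrightarrow> y \<in> S \<Longrightarrow> rl x y \<Longrightarrow> rl (f x) (f y)" unfolding Rm_def by blast
lemma Rm_gm: "Rm S rl f g \<Longrightarrow> x \<in> S \<Longrightarrow> y \<in> S \<Longrightarrow> rl x y \<Longrightarrow> rl (g x) (g y)" unfolding Rm_def by blast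
lemma Rm_le: "Rm S rl f g \<Longrightarrow> x \<in> S \<Longrightarrow> rl (f x) (g x)" unfolding Rm_def by blast

lemma chs_fence_id:
  assumes po: "po S rl" and fin: "finite S" and nb: "\<not> (\<exists>x y. beat S rl x y)"
    and "fence (chs S rl) (\<subseteq>) id g"
  shows "\<forall>v\<in>S. (SOME u. u \<in> g {v}) = v"
  using assms(4) unfolding fence_def
proof (induction rule: rtranclp_induct)
  case base then show ?case by simp
next
  case (step f g)
  have sing: "{v} \<in> chs S rl" if "v \<in> S" for v
    using that po_refl[OF po] by (auto simp: chs_def)
  have pair: "{z, v} \<in> chs S rl" if "v \<in> S" "z \<in> S" "rl z v \<or> rl v z" for z v
    using that po_refl[OF po] by (auto simp: chs_def)
  have Rm_cases: "Rm (chs S rl) (\<subseteq>) f g \<or> Rm (chs S rl) (\<subseteq>) g f" using step(2) by simp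
  have gS: "g c \<in> chs S rl" if "c \<in> chs S rl" for c
    using Rm_cases Rm_f[OF _ that] Rm_g[OF _ that] by blast
  have fS: "f c \<in> chs S rl" if "c \<in> chs S rl" for c
    using Rm_cases Rm_f[OF _ that] Rm_g[OF _ that] by blast
  have SOME_in: "(SOME u. u \<in> c) \<in> c" if "c \<in> chs S rl" for c
  proof -
    have "c \<noteq> {}" using that by (auto simp: chs_def)
    then show ?thesis by (simp add: some_in_eq)
  qed
  show ?case
  proof
    fix v assume vS: "v \<in> S"
    define u where "u = (SOME u. u \<in> g {v})"
    have gv: "g {v} \<in> chs S rl" by (rule gS[OF sing[OF vS]])
    have ugv: "u \<in> g {v}" unfolding u_def by (rule SOME_in[OF gv])
    have uS: "u \<in> S" using ugv gv by (auto simp: chs_def)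
    have dom: "\<forall>z\<in>S. (rl z v \<or> rl v z) \<longrightarrow> (rl z u \<or> rl u z)"
    proof (intro ballI impI)
      fix z assume zS: "z \<in> S" and zv: "rl z v \<or> rl v z"
      have sig: "{z, v} \<in> chs S rl" by (rule pair[OF vS zS zv])
      have "f {z} \<in> chs S rl" by (rule fS[OF sing[OF zS]])
      then have "(SOME u. u \<in> f {z}) \<in> f {z}" by (rule SOME_in)
      moreover have "(SOME u. u \<in> f {z}) = z" using step(3) zS by blast
      ultimately have zfz: "z \<in> f {z}" by simp
      have s1: "{z} \<subseteq> {z, v}" and s2: "{v} \<subseteq> {z, v}" by auto
      from Rm_cases show "rl z u \<or> rl u z"
      proof
        assume R: "Rm (chs S rl) (\<subseteq>) f g"
        have "f {z} \<subseteq> f {z, v}" by (rule Rm_fm[OF R sing[OF zS] sig s1])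
        moreover have "f {z, v} \<subseteq> g {z, v}" by (rule Rm_le[OF R sig])
        moreover have "g {v} \<subseteq> g {z, v}" by (rule Rm_gm[OF R sing[OF vS] sig s2])
        moreover have "g {z, v} \<in> chs S rl" by (rule gS[OF sig])
        ultimately show ?thesis using zfz ugv chs_cmp[of "g {z, v}" S rl z u] by blast
      next
        assume R: "Rm (chs S rl) (\<subseteq>) g f"
        have "f {z} \<subseteq> f {z, v}" by (rule Rm_gm[OF R sing[OF zS] sig s1])
        moreover have "g {z, v} \<subseteq> f {z, v}" by (rule Rm_le[OF R sig])
        moreover have "g {v} \<subseteq> g {z, v}" by (rule Rm_fm[OF R sing[OF vS] sig s2])
        moreover have "f {z, v} \<in> chs S rl" by (rule fS[OF sig])
        ultimately show ?thesis using zfz ugv chs_cmp[of "f {z, v}" S rl z u] by blast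
      qed
    qed
    show "(SOME u. u \<in> g {v}) = v"
    proof (rule ccontr)
      assume "(SOME u. u \<in> g {v}) \<noteq> v"
      then have "u \<noteq> v" by (simp add: u_def)
      then show False using dom_beat[OF po fin vS uS _ dom] nb by blast
    qed
  qed
qed

theorem ccontr_chs_iff:
  assumes fin: "finite S" and po: "po S rl"
  shows "ccontr (chs S rl) (\<subseteq>) \<longleftrightarrow> ccontr S rl"
  using fin po
proof (induction "card S" arbitrary: S rule: less_induct)
  case less
  note fin = less(2) and po = less(3)
  show ?case
  proof (cases "\<exists>x y. beat S rl x y")
    case True
    then obtain x y where b: "beat S rl x y" by blast
    define S0 where "S0 = S - {x}"
    have xS: "x \<in> S" using b by (simp add: beat_def)
    have S0S: "S0 \<subseteq> S" by (auto simp: S0_def)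
    have "card S > 0" using fin xS card_gt_0_iff by blast
    then have card: "card S0 < card S" using fin xS by (simp add: S0_def)
    have po0: "po S0 rl" by (rule po_sub[OF po S0S])
    have fin0: "finite S0" using fin S0S finite_subset by blast
    have IH: "ccontr (chs S0 rl) (\<subseteq>) \<longleftrightarrow> ccontr S0 rl"
      by (rule less(1)[OF card fin0 po0])
    note br = beat_retract[OF po b, folded S0_def]
    note cr = chain_retract[OF po b, folded S0_def]
    have e1: "ccontr S rl \<longleftrightarrow> ccontr S0 rl"
    proof
      show "ccontr S rl \<Longrightarrow> ccontr S0 rl" by (rule retract_ccontr1[OF po S0S br(1) br(2) br(4)])
      show "ccontr S0 rl \<Longrightarrow> ccontr S rl" by (rule retract_ccontr2[OF S0S br(1) br(2) br(3)])
    qed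
    have S0S': "chs S0 rl \<subseteq> chs S rl" by (rule chs_sub[OF S0S])
    have e2: "ccontr (chs S rl) (\<subseteq>) \<longleftrightarrow> ccontr (chs S0 rl) (\<subseteq>)"
    proof
      show "ccontr (chs S rl) (\<subseteq>) \<Longrightarrow> ccontr (chs S0 rl) (\<subseteq>)"
        by (rule retract_ccontr1[OF po_chs S0S' cr(1) cr(2) cr(4)])
      show "ccontr (chs S0 rl) (\<subseteq>) \<Longrightarrow> ccontr (chs S rl) (\<subseteq>)"
        by (rule retract_ccontr2[OF S0S' cr(1) cr(2) cr(3)])
    qed
    show ?thesis using e1 e2 IH by blast
  next
    case False
    note nb = False
    have triv_chs: "ccontr (chs S rl) (\<subseteq>)" if all: "\<forall>a\<in>S. \<forall>b\<in>S. a = b"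
    proof (rule ccontr_triv[OF po_chs])
      show "\<forall>a\<in>chs S rl. \<forall>b\<in>chs S rl. a = b"
      proof (intro ballI)
        fix a b assume "a \<in> chs S rl" "b \<in> chs S rl"
        then have ab: "a \<noteq> {}" "b \<noteq> {}" "a \<subseteq> S" "b \<subseteq> S" by (auto simp: chs_def)
        obtain p where pa: "p \<in> a" using ab(1) by blast
        have "\<forall>x\<in>a. x = p" "\<forall>x\<in>b. x = p" using all ab(3,4) pa by blast+
        then have "a \<subseteq> {p}" "b \<subseteq> {p}" by blast+
        then show "a = b" using ab(1,2) by (metis subset_singletonD)
      qed
    qed
    show ?thesis
    proof
      assume cc: "ccontr (chs S rl) (\<subseteq>)"
      have "\<forall>a\<in>S. \<forall>b\<in>S. a = b"
      proof (cases "S = {}")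
        case False
        then obtain v where vS: "v \<in> S" by blast
        then have "{v} \<in> chs S rl" using po_refl[OF po vS] by (auto simp: chs_def)
        then obtain c where c: "c \<in> chs S rl" "fence (chs S rl) (\<subseteq>) id (\<lambda>_. c)"
          using cc unfolding ccontr_def by blast
        have "\<forall>v\<in>S. (SOME u. u \<in> c) = v"
          using chs_fence_id[OF po fin nb c(2)] by simp
        then show ?thesis by (metis (no_types))
      qed simp
      then show "ccontr S rl" by (rule ccontr_triv[OF po])
    next
      assume "ccontr S rl"
      then have "\<forall>a\<in>S. \<forall>b\<in>S. a = b" by (rule minimal_ccontr[OF po fin nb])
      then show "ccontr (chs S rl) (\<subseteq>)" by (rule triv_chs)
    qed
  qed
qed

lemma open_poset:
  "openin (poset_topology S rl) U \<longleftrightarrow> U \<subseteq> S \<and> (\<forall>x\<in>U. \<forall>y\<in>S. rl y x \<longrightarrow> y \<in> U)"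
  by (simp add: poset_topology_def istopology_downsets)

lemma topspace_poset: "topspace (poset_topology S rl) = S"
proof -
  have "openin (poset_topology S rl) S" by (simp add: open_poset)
  moreover have "\<And>U. openin (poset_topology S rl) U \<Longrightarrow> U \<subseteq> S" by (simp add: open_poset)
  ultimately show ?thesis unfolding topspace_def by blast
qed

lemma cont_poset:
  assumes refl: "\<forall>y\<in>Q. s y y" and trans: "\<forall>x\<in>Q. \<forall>y\<in>Q. \<forall>z\<in>Q. s x y \<and> s y z \<longrightarrow> s x z"
  shows "continuous_map (poset_topology S r) (poset_topology Q s) f \<longleftrightarrow>
    (\<forall>x\<in>S. f x \<in> Q) \<and> (\<forall>x\<in>S. \<forall>y\<in>S. r x y \<longrightarrow> s (f x) (f y))"
proof
  assume c: "continuous_map (poset_topology S r) (poset_topology Q s) f"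
  then have fQ: "\<forall>x\<in>S. f x \<in> Q" unfolding continuous_map_def topspace_poset by blast
  have "s (f x) (f y)" if xS: "x \<in> S" and yS: "y \<in> S" and rxy: "r x y" for x y
  proof -
    define D where "D = {z\<in>Q. s z (f y)}"
    have "openin (poset_topology Q s) D"
      unfolding open_poset D_def using trans fQ yS by blast
    then have "openin (poset_topology S r) {x \<in> topspace (poset_topology S r). f x \<in> D}"
      using c unfolding continuous_map_def by blast
    then have op: "openin (poset_topology S r) {x \<in> S. f x \<in> D}" by (simp add: topspace_poset)
    have "y \<in> {x \<in> S. f x \<in> D}" using yS fQ refl by (auto simp: D_def)
    then have "x \<in> {x \<in> S. f x \<in> D}" using op xS rxy unfolding open_poset by blast
    then show ?thesis by (simp add: D_def)
  qed
  then show "(\<forall>x\<in>S. f x \<in> Q) \<and> (\<forall>x\<in>S. \<forall>y\<in>S. r x y \<longrightarrow> s (f x) (f y))" using fQ by blast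
next
  assume h: "(\<forall>x\<in>S. f x \<in> Q) \<and> (\<forall>x\<in>S. \<forall>y\<in>S. r x y \<longrightarrow> s (f x) (f y))"
  show "continuous_map (poset_topology S r) (poset_topology Q s) f"
    unfolding continuous_map_def topspace_poset
  proof (intro conjI allI impI)
    show "f \<in> S \<rightarrow> Q" using h by blast
  next
    fix U assume U: "openin (poset_topology Q s) U"
    show "openin (poset_topology S r) {x \<in> S. f x \<in> U}"
      unfolding open_poset
    proof (intro conjI ballI impI)
      show "{x \<in> S. f x \<in> U} \<subseteq> S" by blast
    next
      fix x y assume x: "x \<in> {x \<in> S. f x \<in> U}" and yS: "y \<in> S" and ryx: "r y x"
      have "s (f y) (f x)" using h x yS ryx by blast
      moreover have "f y \<in> Q" using h yS by blast
      ultimately have "f y \<in> U" using U x unfolding open_poset by blast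
      then show "y \<in> {x \<in> S. f x \<in> U}" using yS by blast
    qed
  qed
qed

lemma po_cont:
  assumes "po S rl"
  shows "continuous_map (poset_topology S rl) (poset_topology S rl) f \<longleftrightarrow>
    (\<forall>x\<in>S. f x \<in> S) \<and> (\<forall>x\<in>S. \<forall>y\<in>S. rl x y \<longrightarrow> rl (f x) (f y))"
proof (rule cont_poset)
  show "\<forall>y\<in>S. rl y y" using po_refl[OF assms] by blast
  show "\<forall>x\<in>S. \<forall>y\<in>S. \<forall>z\<in>S. rl x y \<and> rl y z \<longrightarrow> rl x z" using po_trans[OF assms] by blast
qed

lemma iso_homeo:
  assumes reflP: "\<forall>y\<in>P. r y y" and transP: "\<forall>x\<in>P. \<forall>y\<in>P. \<forall>z\<in>P. r x y \<and> r y z \<longrightarrow> r x z"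
    and reflQ: "\<forall>y\<in>Q. s y y" and transQ: "\<forall>x\<in>Q. \<forall>y\<in>Q. \<forall>z\<in>Q. s x y \<and> s y z \<longrightarrow> s x z"
    and bij: "bij_betw F P Q" and iso: "\<forall>x\<in>P. \<forall>y\<in>P. r x y \<longleftrightarrow> s (F x) (F y)"
  shows "poset_topology P r homeomorphic_space poset_topology Q s"
proof -
  define G where "G = inv_into P F"
  have GQ: "\<forall>y\<in>Q. G y \<in> P" and FG: "\<forall>y\<in>Q. F (G y) = y" and GF: "\<forall>x\<in>P. G (F x) = x"
    using bij unfolding G_def
    by (auto simp: bij_betw_def inv_into_into f_inv_into_f inv_into_f_f)
  have FP: "\<forall>x\<in>P. F x \<in> Q" using bij by (auto simp: bij_betw_def)
  have c1: "continuous_map (poset_topology P r) (poset_topology Q s) F"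
    using cont_poset[OF reflQ transQ] FP iso by blast
  have "\<forall>x\<in>Q. \<forall>y\<in>Q. s x y \<longrightarrow> r (G x) (G y)"
    using iso GQ FG by metis
  then have c2: "continuous_map (poset_topology Q s) (poset_topology P r) G"
    using cont_poset[OF reflP transP] GQ by blast
  have "homeomorphic_maps (poset_topology P r) (poset_topology Q s) F G"
    unfolding homeomorphic_maps_def topspace_poset using c1 c2 FG GF by blast
  then show ?thesis unfolding homeomorphic_space_def by blast
qed

lemma Rm_homot:
  assumes R: "Rm S rl f g"
  shows "homotopic_with (\<lambda>_. True) (poset_topology S rl) (poset_topology S rl) f g"
proof -
  let ?T = "poset_topology S rl"
  let ?I = "top_of_set {0..1::real}"
  define h where "h = (\<lambda>(t::real, x). if t < 1 then f x else g x)"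
  have fS: "\<forall>x\<in>S. f x \<in> S" and gS: "\<forall>x\<in>S. g x \<in> S" and fm: "\<forall>x\<in>S. \<forall>y\<in>S. rl x y \<longrightarrow> rl (f x) (f y)"
    and gm: "\<forall>x\<in>S. \<forall>y\<in>S. rl x y \<longrightarrow> rl (g x) (g y)" and fg: "\<forall>x\<in>S. rl (f x) (g x)"
    using R unfolding Rm_def by blast+
  have I01: "openin ?I {0..<1}"
    unfolding openin_subtopology
    by (rule exI[of _ "{..<1}"]) auto
  have cont: "continuous_map (prod_topology ?I ?T) ?T h"
    unfolding continuous_map_def topspace_prod_topology topspace_poset
  proof (intro conjI allI impI)
    show "h \<in> topspace ?I \<times> S \<rightarrow> S" using fS gS by (auto simp: h_def)
  next
    fix U assume U: "openin ?T U"
    have Ud: "U \<subseteq> S" "\<forall>x\<in>U. \<forall>y\<in>S. rl y x \<longrightarrow> y \<in> U" using U unfolding open_poset by blast+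
    have eq: "{p \<in> topspace ?I \<times> S. h p \<in> U} = ({0..<1} \<times> {x\<in>S. f x \<in> U}) \<union> ({0..1} \<times> {x\<in>S. g x \<in> U})"
    proof -
      have gf: "\<And>x. x \<in> S \<Longrightarrow> g x \<in> U \<Longrightarrow> f x \<in> U" using Ud fS fg by blast
      show ?thesis using gf by (auto simp: h_def split: if_splits)
    qed
    have o1: "openin ?T {x\<in>S. f x \<in> U}" unfolding open_poset using Ud fm fS by blast
    have o2: "openin ?T {x\<in>S. g x \<in> U}" unfolding open_poset using Ud gm gS by blast
    have "openin (prod_topology ?I ?T) ({0..<1} \<times> {x\<in>S. f x \<in> U})"
      using I01 o1 by (simp add: openin_prod_Times_iff)
    moreover have "openin (prod_topology ?I ?T) ({0..1} \<times> {x\<in>S. g x \<in> U})"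
    proof -
      have "openin ?I {0..1}" using openin_topspace[of ?I] by simp
      then show ?thesis using o2 by (simp add: openin_prod_Times_iff)
    qed
    ultimately show "openin (prod_topology ?I ?T) {p \<in> topspace ?I \<times> S. h p \<in> U}"
      unfolding eq by blast
  qed
  show ?thesis unfolding homotopic_with_def
    by (rule exI[of _ h]) (use cont in \<open>auto simp: h_def\<close>)
qed

lemma fence_homot:
  assumes "fence S rl f g" and "continuous_map (poset_topology S rl) (poset_topology S rl) f"
  shows "homotopic_with (\<lambda>_. True) (poset_topology S rl) (poset_topology S rl) f g"
  using assms(1) unfolding fence_def
proof (induction rule: rtranclp_induct)
  case base then show ?case using assms(2) by simp
next
  case (step y z)
  have "homotopic_with (\<lambda>_. True) (poset_topology S rl) (poset_topology S rl) y z"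
    using step(2) Rm_homot homotopic_with_sym by blast
  then show ?case using step(3) homotopic_with_trans by blast
qed

theorem contractible_iff_ccontr:
  assumes fin: "finite S" and po: "po S rl"
  shows "contractible_space (poset_topology S rl) \<longleftrightarrow> ccontr S rl"
proof (cases "S = {}")
  case True
  then have "poset_topology S rl = trivial_topology"
    using null_topspace_iff_trivial topspace_poset by metis
  then show ?thesis using True by (simp add: ccontr_def)
next
  case False
  let ?T = "poset_topology S rl"
  let ?I = "top_of_set {0..1::real}"
  have nt: "?T \<noteq> trivial_topology" using False null_topspace_iff_trivial topspace_poset by metis
  show ?thesis
  proof
    assume "contractible_space ?T"
    then obtain a where aS: "a \<in> S" and hom: "homotopic_with (\<lambda>x. True) ?T ?T id (\<lambda>x. a)"
      using nt unfolding contractible_space topspace_poset by blast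
    then obtain h where hc: "continuous_map (prod_topology ?I ?T) ?T h"
      and h0: "\<forall>x. h (0, x) = x" and h1: "\<forall>x. h (1, x) = a"
      unfolding homotopic_with_def by auto
    define H where "H = (\<lambda>t x. h (t, x))"
    have Hc: "continuous_map ?T ?T (H t)" if "t \<in> {0..1}" for t
    proof -
      have "continuous_map ?T ?T (h \<circ> Pair t)"
        by (rule continuous_map_o_Pair[OF hc]) (use that in simp)
      moreover have "h \<circ> Pair t = H t" by (auto simp: H_def)
      ultimately show ?thesis by simp
    qed
    have HS: "\<forall>x\<in>S. H t x \<in> S" and Hm: "\<forall>x\<in>S. \<forall>y\<in>S. rl x y \<longrightarrow> rl (H t x) (H t y)"
      if "t \<in> {0..1}" for t
      using Hc[OF that] po_cont[OF po] by blast+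
    have Hx: "continuous_map ?I ?T (\<lambda>s. H s x)" if "x \<in> S" for x
    proof -
      have "continuous_map ?I (prod_topology ?I ?T) (\<lambda>s. (s, x))"
        by (rule continuous_map_pairedI) (use that in \<open>auto simp: topspace_poset\<close>)
      from continuous_map_compose[OF this hc] show ?thesis by (simp add: o_def H_def)
    qed
    define W where "W = (\<lambda>t. {s\<in>{0..1}. \<forall>x\<in>S. rl (H s x) (H t x)})"
    have Wopen: "openin ?I (W t)" if t: "t \<in> {0..1}" for t
    proof -
      define D where "D = (\<lambda>y. {z\<in>S. rl z y})"
      have Dopen: "openin ?T (D y)" if "y \<in> S" for y
        unfolding open_poset D_def using po_trans[OF po] that by blast
      have "W t = (\<Inter>x\<in>S. {s \<in> topspace ?I. H s x \<in> D (H t x)})"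
        using HS t False unfolding W_def D_def by auto
      moreover have "openin ?I (\<Inter>x\<in>S. {s \<in> topspace ?I. H s x \<in> D (H t x)})"
      proof (rule openin_INT2[OF fin False])
        fix x assume "x \<in> S"
        then show "openin ?I {s \<in> topspace ?I. H s x \<in> D (H t x)}"
          using openin_continuous_map_preimage[OF Hx Dopen] HS t by blast
      qed
      ultimately show ?thesis by simp
    qed
    have Wself: "t \<in> W t" if "t \<in> {0..1}" for t
      using that HS po_refl[OF po] unfolding W_def by blast
    have RmW: "Rm S rl (H s') (H s)" if "s \<in> {0..1}" "s' \<in> W s" for s s'
    proof -
      have s': "s' \<in> {0..1}" "\<forall>x\<in>S. rl (H s' x) (H s x)" using that(2) by (auto simp: W_def)
      show ?thesis unfolding Rm_def using HS[OF that(1)] HS[OF s'(1)] Hm[OF that(1)] Hm[OF s'(1)] s'(2)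
        by blast
    qed
    define C where "C = {s\<in>{0..1}. fence S rl id (H s)}"
    have Csub: "C \<subseteq> {0..1}" by (auto simp: C_def)
    have WsubI: "W s \<subseteq> {0..1}" for s by (auto simp: W_def)
    have Ceq: "C = \<Union>(W ` C)"
    proof
      show "C \<subseteq> \<Union>(W ` C)" using Wself Csub by blast
    next
      show "\<Union>(W ` C) \<subseteq> C"
      proof
        fix s' assume "s' \<in> \<Union>(W ` C)"
        then obtain s where s: "s \<in> C" "s' \<in> W s" by blast
        have "fence S rl id (H s')"
          using fence_trans[OF _ fence_step'[OF RmW]] s Csub unfolding C_def by blast
        then show "s' \<in> C" using WsubI s unfolding C_def by blast
      qed
    qed
    have Ceq2: "{0..1} - C = \<Union>(W ` ({0..1} - C))"
    proof
      show "{0..1} - C \<subseteq> \<Union>(W ` ({0..1} - C))" using Wself by blast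
    next
      show "\<Union>(W ` ({0..1} - C)) \<subseteq> {0..1} - C"
      proof
        fix s' assume "s' \<in> \<Union>(W ` ({0..1} - C))"
        then obtain s where s: "s \<in> {0..1}" "s \<notin> C" "s' \<in> W s" by blast
        have "s' \<notin> C"
        proof
          assume "s' \<in> C"
          then have "fence S rl id (H s')" by (simp add: C_def)
          then have "fence S rl id (H s)" using fence_trans[OF _ fence_step[OF RmW[OF s(1,3)]]] by blast
          then show False using s unfolding C_def by blast
        qed
        then show "s' \<in> {0..1} - C" using s WsubI by blast
      qed
    qed
    have Copen: "openin ?I C" by (subst Ceq) (use Wopen Csub in blast)
    have Cclosed: "closedin ?I C"
    proof -
      have "openin ?I ({0..1} - C)" by (subst Ceq2) (use Wopen in blast)
      then show ?thesis unfolding closedin_def using Csub by simp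
    qed
    have "H 0 = id" using h0 by (auto simp: H_def)
    then have "0 \<in> C" by (simp add: C_def fence_refl)
    then have "C = {0..1}" using connected_clopen[THEN iffD1, OF connected_Icc] Copen Cclosed by blast
    then have "1 \<in> C" by simp
    moreover have "H 1 = (\<lambda>_. a)" using h1 by (auto simp: H_def)
    ultimately have "fence S rl id (\<lambda>_. a)" by (simp add: C_def)
    then show "ccontr S rl" using aS by (auto simp: ccontr_def)
  next
    assume "ccontr S rl"
    then obtain c where c: "c \<in> S" "fence S rl id (\<lambda>_. c)" using False by (auto simp: ccontr_def)
    have "homotopic_with (\<lambda>_. True) ?T ?T id (\<lambda>_. c)"
      by (rule fence_homot[OF c(2)]) simp
    then show "contractible_space ?T" unfolding contractible_space_def by blast
  qed
qed

section \<open>Basic facts on finite G-posets\<close>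

locale fgp =
  fixes G :: "('g, 'm) monoid_scheme" and Y :: "'b set" and r :: "'b \<Rightarrow> 'b \<Rightarrow> bool"
    and \<alpha> :: "'b \<Rightarrow> 'g \<Rightarrow> 'b"
  assumes fgp: "finite_G_poset G Y r \<alpha>"
begin

lemma grp: "group G" using fgp by (simp add: finite_G_poset_def)
lemma finG: "finite (carrier G)" using fgp by (simp add: finite_G_poset_def)
lemma finY: "finite Y" using fgp by (simp add: finite_G_poset_def)
lemma refl: "y \<in> Y \<Longrightarrow> r y y" using fgp by (simp add: finite_G_poset_def)
lemma antisym: "x \<in> Y \<Longrightarrow> y \<in> Y \<Longrightarrow> r x y \<Longrightarrow> r y x \<Longrightarrow> x = y"
  using fgp unfolding finite_G_poset_def by blast
lemma trans: "x \<in> Y \<Longrightarrow> y \<in> Y \<Longrightarrow> z \<in> Y \<Longrightarrow> r x y \<Longrightarrow> r y z \<Longrightarrow> r x z"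
  using fgp unfolding finite_G_poset_def by blast
lemma closed: "y \<in> Y \<Longrightarrow> g \<in> carrier G \<Longrightarrow> \<alpha> y g \<in> Y"
  using fgp unfolding finite_G_poset_def by blast
lemma act1: "y \<in> Y \<Longrightarrow> \<alpha> y \<one>\<^bsub>G\<^esub> = y"
  using fgp unfolding finite_G_poset_def by blast
lemma actm: "y \<in> Y \<Longrightarrow> g \<in> carrier G \<Longrightarrow> h \<in> carrier G \<Longrightarrow> \<alpha> y (g \<otimes>\<^bsub>G\<^esub> h) = \<alpha> (\<alpha> y g) h"
  using fgp unfolding finite_G_poset_def by blast
lemma mono: "x \<in> Y \<Longrightarrow> y \<in> Y \<Longrightarrow> g \<in> carrier G \<Longrightarrow> r x y \<Longrightarrow> r (\<alpha> x g) (\<alpha> y g)"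
  using fgp unfolding finite_G_poset_def by blast

lemma mclosed: "g \<in> carrier G \<Longrightarrow> h \<in> carrier G \<Longrightarrow> g \<otimes>\<^bsub>G\<^esub> h \<in> carrier G"
  using monoid.m_closed[OF group.is_monoid[OF grp]] by blast
lemma oneclosed: "\<one>\<^bsub>G\<^esub> \<in> carrier G"
  using monoid.one_closed[OF group.is_monoid[OF grp]] by blast

lemma po: "po Y r"
  unfolding po_def using refl antisym trans by blast

lemma act_inv: "y \<in> Y \<Longrightarrow> g \<in> carrier G \<Longrightarrow> \<alpha> (\<alpha> y g) (inv\<^bsub>G\<^esub> g) = y"
  using actm[of y g "inv\<^bsub>G\<^esub> g"] act1 group.r_inv[OF grp] group.inv_closed[OF grp] by simp

lemma act_inv': "y \<in> Y \<Longrightarrow> g \<in> carrier G \<Longrightarrow> \<alpha> (\<alpha> y (inv\<^bsub>G\<^esub> g)) g = y"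
  using actm[of y "inv\<^bsub>G\<^esub> g" g] act1 group.l_inv[OF grp] group.inv_closed[OF grp] by simp

lemma orb_mem: "y \<in> Y \<Longrightarrow> g \<in> carrier G \<Longrightarrow> \<alpha> y g \<in> gorbit G \<alpha> y"
  unfolding gorbit_def by blast

lemma orb_self: "y \<in> Y \<Longrightarrow> y \<in> gorbit G \<alpha> y"
  using orb_mem[of y "\<one>\<^bsub>G\<^esub>"] act1 oneclosed by simp

lemma orb_sub: "y \<in> Y \<Longrightarrow> gorbit G \<alpha> y \<subseteq> Y"
  unfolding gorbit_def using closed by blast

lemma orb_eq: assumes y: "y \<in> Y" and g: "g \<in> carrier G"
  shows "gorbit G \<alpha> (\<alpha> y g) = gorbit G \<alpha> y"
proof
  show "gorbit G \<alpha> (\<alpha> y g) \<subseteq> gorbit G \<alpha> y"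
  proof
    fix x assume "x \<in> gorbit G \<alpha> (\<alpha> y g)"
    then obtain h where h: "h \<in> carrier G" "x = \<alpha> (\<alpha> y g) h" unfolding gorbit_def by blast
    then have "x = \<alpha> y (g \<otimes>\<^bsub>G\<^esub> h)" using actm y g by simp
    then show "x \<in> gorbit G \<alpha> y" using orb_mem y g h mclosed by simp
  qed
next
  show "gorbit G \<alpha> y \<subseteq> gorbit G \<alpha> (\<alpha> y g)"
  proof
    fix x assume "x \<in> gorbit G \<alpha> y"
    then obtain h where h: "h \<in> carrier G" "x = \<alpha> y h" unfolding gorbit_def by blast
    have ig: "inv\<^bsub>G\<^esub> g \<in> carrier G" using group.inv_closed[OF grp g] .
    have "\<alpha> (\<alpha> y g) (inv\<^bsub>G\<^esub> g \<otimes>\<^bsub>G\<^esub> h) = \<alpha> (\<alpha> (\<alpha> y g) (inv\<^bsub>G\<^esub> g)) h"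
      using actm closed y g ig h by simp
    also have "\<dots> = x" using act_inv y g h by simp
    finally show "x \<in> gorbit G \<alpha> (\<alpha> y g)"
      using orb_mem[OF closed[OF y g], of "inv\<^bsub>G\<^esub> g \<otimes>\<^bsub>G\<^esub> h"] mclosed[OF ig h(1)] by simp
  qed
qed

lemma orb_eq': "y \<in> Y \<Longrightarrow> x \<in> gorbit G \<alpha> y \<Longrightarrow> gorbit G \<alpha> x = gorbit G \<alpha> y"
  unfolding gorbit_def using orb_eq unfolding gorbit_def by blast

lemma fix_le: assumes y: "y \<in> Y" and m: "m \<in> carrier G" and le: "r y (\<alpha> y m)"
  shows "\<alpha> y m = y"
proof -
  have pw: "r y (\<alpha> y (m [^]\<^bsub>G\<^esub> n))" for n :: nat
  proof (induction n)
    case 0 then show ?case using act1 y refl by simp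
  next
    case (Suc n)
    have mn: "m [^]\<^bsub>G\<^esub> n \<in> carrier G" using monoid.nat_pow_closed[OF group.is_monoid[OF grp] m] .
    have "r (\<alpha> y m) (\<alpha> (\<alpha> y (m [^]\<^bsub>G\<^esub> n)) m)"
      using mono[OF y closed[OF y mn] m Suc] .
    also have "\<alpha> (\<alpha> y (m [^]\<^bsub>G\<^esub> n)) m = \<alpha> y (m [^]\<^bsub>G\<^esub> Suc n)"
      using actm[OF y mn m] monoid.nat_pow_Suc[OF group.is_monoid[OF grp]] by simp
    finally have "r (\<alpha> y m) (\<alpha> y (m [^]\<^bsub>G\<^esub> Suc n))" .
    moreover have "\<alpha> y (m [^]\<^bsub>G\<^esub> Suc n) \<in> Y"
      using closed[OF y] monoid.nat_pow_closed[OF group.is_monoid[OF grp] m] by blast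
    ultimately show ?case using trans[OF y closed[OF y m]] le by blast
  qed
  define k where "k = group.ord G m - 1"
  have o1: "group.ord G m \<ge> 1" using group.ord_ge_1[OF grp finG m] .
  have mk: "m [^]\<^bsub>G\<^esub> k \<in> carrier G" using monoid.nat_pow_closed[OF group.is_monoid[OF grp] m] .
  have "m [^]\<^bsub>G\<^esub> k \<otimes>\<^bsub>G\<^esub> m = m [^]\<^bsub>G\<^esub> (Suc k)"
    using monoid.nat_pow_Suc[OF group.is_monoid[OF grp]] by simp
  also have "Suc k = group.ord G m" using o1 by (simp add: k_def)
  also have "m [^]\<^bsub>G\<^esub> (group.ord G m) = \<one>\<^bsub>G\<^esub>" using group.pow_ord_eq_1[OF grp m] .
  finally have e: "m [^]\<^bsub>G\<^esub> k \<otimes>\<^bsub>G\<^esub> m = \<one>\<^bsub>G\<^esub>" .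
  have "r (\<alpha> y m) (\<alpha> (\<alpha> y (m [^]\<^bsub>G\<^esub> k)) m)"
    using mono[OF y closed[OF y mk] m pw[of k]] .
  also have "\<alpha> (\<alpha> y (m [^]\<^bsub>G\<^esub> k)) m = y" using actm[OF y mk m] e act1[OF y] by simp
  finally have "r (\<alpha> y m) y" .
  then show ?thesis using antisym[OF closed[OF y m] y] le by blast
qed

lemma fix_ge: assumes y: "y \<in> Y" and m: "m \<in> carrier G" and le: "r (\<alpha> y m) y"
  shows "\<alpha> y m = y"
proof -
  have im: "inv\<^bsub>G\<^esub> m \<in> carrier G" using group.inv_closed[OF grp m] .
  have "r (\<alpha> (\<alpha> y m) (inv\<^bsub>G\<^esub> m)) (\<alpha> y (inv\<^bsub>G\<^esub> m))" using mono[OF closed[OF y m] y im le] .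
  then have "r y (\<alpha> y (inv\<^bsub>G\<^esub> m))" using act_inv[OF y m] by simp
  then have "\<alpha> y (inv\<^bsub>G\<^esub> m) = y" by (rule fix_le[OF y im])
  then show ?thesis using act_inv'[OF y m] by metis
qed

lemma orbit_cmp_eq: assumes z: "z \<in> Y" and w: "w \<in> gorbit G \<alpha> z" and c: "r z w \<or> r w z"
  shows "w = z"
proof -
  obtain m where m: "m \<in> carrier G" "w = \<alpha> z m" using w unfolding gorbit_def by blast
  show ?thesis using c fix_le[OF z m(1)] fix_ge[OF z m(1)] m(2) by blast
qed

lemma orb_rel: assumes x: "x \<in> gorbit G \<alpha> y" and x': "x' \<in> gorbit G \<alpha> y" and y: "y \<in> Y"
  shows "\<exists>g\<in>carrier G. x' = \<alpha> x g"
proof -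
  obtain g1 where g1: "g1 \<in> carrier G" "x = \<alpha> y g1" using x unfolding gorbit_def by blast
  obtain g2 where g2: "g2 \<in> carrier G" "x' = \<alpha> y g2" using x' unfolding gorbit_def by blast
  have ig: "inv\<^bsub>G\<^esub> g1 \<in> carrier G" using group.inv_closed[OF grp g1(1)] .
  have "\<alpha> x (inv\<^bsub>G\<^esub> g1 \<otimes>\<^bsub>G\<^esub> g2) = \<alpha> (\<alpha> x (inv\<^bsub>G\<^esub> g1)) g2"
    using actm[OF _ ig g2(1)] closed[OF y g1(1)] g1(2) by simp
  also have "\<alpha> x (inv\<^bsub>G\<^esub> g1) = y" using act_inv[OF y g1(1)] g1(2) by simp
  finally show ?thesis using g2 mclosed[OF ig g2(1)] by metis
qed

definition OP where "OP = gorbit G \<alpha> ` Y"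

lemma finOP: "finite OP" using finY by (simp add: OP_def)

lemma po_OP: "po OP (orbit_le r)"
  unfolding po_def
proof (intro conjI ballI impI)
  fix O1 assume "O1 \<in> OP"
  then obtain y where y: "y \<in> Y" "O1 = gorbit G \<alpha> y" by (auto simp: OP_def)
  then show "orbit_le r O1 O1" unfolding orbit_le_def using orb_self refl by blast
next
  fix O1 O2 assume O1: "O1 \<in> OP" and O2: "O2 \<in> OP" and le: "orbit_le r O1 O2 \<and> orbit_le r O2 O1"
  obtain b1 where b1: "b1 \<in> Y" "O1 = gorbit G \<alpha> b1" using O1 by (auto simp: OP_def)
  obtain b2 where b2: "b2 \<in> Y" "O2 = gorbit G \<alpha> b2" using O2 by (auto simp: OP_def)
  obtain y1 z2 where yz: "y1 \<in> O1" "z2 \<in> O2" "r y1 z2" using le unfolding orbit_le_def by blast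
  obtain y2 z1 where yz2: "y2 \<in> O2" "z1 \<in> O1" "r y2 z1" using le unfolding orbit_le_def by blast
  obtain k where k: "k \<in> carrier G" "z2 = \<alpha> y2 k" using orb_rel[OF yz2(1)[unfolded b2(2)] yz(2)[unfolded b2(2)] b2(1)] by blast
  have y2Y: "y2 \<in> Y" and z1Y: "z1 \<in> Y" and y1Y: "y1 \<in> Y" and z2Y: "z2 \<in> Y"
    using yz yz2 orb_sub b1 b2 by blast+
  have "r z2 (\<alpha> z1 k)" using mono[OF y2Y z1Y k(1) yz2(3)] k(2) by simp
  moreover have z1'O: "\<alpha> z1 k \<in> O1"
    using orb_eq'[OF b1(1) yz2(2)[unfolded b1(2)]] orb_mem[OF z1Y k(1)] b1(2) by simp
  ultimately have r1: "r y1 (\<alpha> z1 k)" using trans[OF y1Y z2Y closed[OF z1Y k(1)] yz(3)] by blast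
  have "\<alpha> z1 k \<in> gorbit G \<alpha> y1" using z1'O orb_eq'[OF b1(1) yz(1)[unfolded b1(2)]] b1(2) by simp
  then have "\<alpha> z1 k = y1" using orbit_cmp_eq[OF y1Y] r1 by blast
  then have "r z2 y1" using \<open>r z2 (\<alpha> z1 k)\<close> by simp
  then have "z2 = y1" using antisym[OF y1Y z2Y yz(3)] by blast
  then show "O1 = O2"
    using orb_eq'[OF b1(1) yz(1)[unfolded b1(2)]] orb_eq'[OF b2(1) yz(2)[unfolded b2(2)]] b1(2) b2(2) by simp
next
  fix O1 O2 O3 assume O1: "O1 \<in> OP" and O2: "O2 \<in> OP" and O3: "O3 \<in> OP"
    and le: "orbit_le r O1 O2 \<and> orbit_le r O2 O3"
  obtain b1 where b1: "b1 \<in> Y" "O1 = gorbit G \<alpha> b1" using O1 by (auto simp: OP_def)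
  obtain b2 where b2: "b2 \<in> Y" "O2 = gorbit G \<alpha> b2" using O2 by (auto simp: OP_def)
  obtain b3 where b3: "b3 \<in> Y" "O3 = gorbit G \<alpha> b3" using O3 by (auto simp: OP_def)
  obtain y1 z2 where yz: "y1 \<in> O1" "z2 \<in> O2" "r y1 z2" using le unfolding orbit_le_def by blast
  obtain y2 z3 where yz2: "y2 \<in> O2" "z3 \<in> O3" "r y2 z3" using le unfolding orbit_le_def by blast
  obtain k where k: "k \<in> carrier G" "y2 = \<alpha> z2 k" using orb_rel[OF yz(2)[unfolded b2(2)] yz2(1)[unfolded b2(2)] b2(1)] by blast
  have y2Y: "y2 \<in> Y" and z3Y: "z3 \<in> Y" and y1Y: "y1 \<in> Y" and z2Y: "z2 \<in> Y"
    using yz yz2 orb_sub b1 b2 b3 by blast+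
  have "r (\<alpha> y1 k) y2" using mono[OF y1Y z2Y k(1) yz(3)] k(2) by simp
  then have "r (\<alpha> y1 k) z3" using trans[OF closed[OF y1Y k(1)] y2Y z3Y] yz2(3) by blast
  moreover have "\<alpha> y1 k \<in> O1"
    using orb_eq'[OF b1(1) yz(1)[unfolded b1(2)]] orb_mem[OF y1Y k(1)] b1(2) by simp
  ultimately show "orbit_le r O1 O3" unfolding orbit_le_def using yz2(2) by blast
qed

lemma le_orbit_le: "x \<in> Y \<Longrightarrow> y \<in> Y \<Longrightarrow> r x y \<Longrightarrow> orbit_le r (gorbit G \<alpha> x) (gorbit G \<alpha> y)"
  unfolding orbit_le_def using orb_self by blast

end

lemma orbit_iso:
  assumes fg: "finite_G_poset G Y r \<alpha>" and poQ: "po Q s"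
    and fQ: "\<forall>y\<in>Y. f y \<in> Q" and surj: "Q \<subseteq> f ` Y"
    and iso: "\<forall>a\<in>Y. \<forall>b\<in>Y. orbit_le r (gorbit G \<alpha> a) (gorbit G \<alpha> b) \<longleftrightarrow> s (f a) (f b)"
  shows "contractible_space (orbit_space G \<alpha> Y r) \<longleftrightarrow> contractible_space (poset_topology Q s)"
proof -
  interpret fgp G Y r \<alpha> by (rule fgp.intro[OF fg])
  define sel where "sel = (\<lambda>Ob. SOME a. a \<in> Y \<and> gorbit G \<alpha> a = Ob)"
  have sel: "sel Ob \<in> Y \<and> gorbit G \<alpha> (sel Ob) = Ob" if "Ob \<in> OP" for Ob
  proof -
    have "\<exists>a. a \<in> Y \<and> gorbit G \<alpha> a = Ob" using that by (auto simp: OP_def)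
    then show ?thesis unfolding sel_def by (rule someI_ex)
  qed
  define F where "F = (\<lambda>Ob. f (sel Ob))"
  have isoF: "\<forall>O1\<in>OP. \<forall>O2\<in>OP. orbit_le r O1 O2 \<longleftrightarrow> s (F O1) (F O2)"
  proof (intro ballI)
    fix O1 O2 assume "O1 \<in> OP" "O2 \<in> OP"
    then show "orbit_le r O1 O2 \<longleftrightarrow> s (F O1) (F O2)"
      using sel[of O1] sel[of O2] iso unfolding F_def by metis
  qed
  have FQ: "\<forall>Ob\<in>OP. F Ob \<in> Q" using sel fQ unfolding F_def by blast
  have bij: "bij_betw F OP Q"
    unfolding bij_betw_def
  proof
    show "inj_on F OP"
    proof (rule inj_onI)
      fix O1 O2 assume Ob: "O1 \<in> OP" "O2 \<in> OP" "F O1 = F O2"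
      have "s (F O1) (F O2)" "s (F O2) (F O1)" using Ob po_refl[OF poQ] FQ by auto
      then have "orbit_le r O1 O2" "orbit_le r O2 O1" using isoF Ob by blast+
      then show "O1 = O2" using po_antisym[OF po_OP Ob(1,2)] by blast
    qed
    show "F ` OP = Q"
    proof
      show "F ` OP \<subseteq> Q" using FQ by blast
      show "Q \<subseteq> F ` OP"
      proof
        fix q assume "q \<in> Q"
        then obtain a where a: "a \<in> Y" "q = f a" using surj by blast
        define Ob where "Ob = gorbit G \<alpha> a"
        have Ob: "Ob \<in> OP" using a by (simp add: Ob_def OP_def)
        have "orbit_le r (gorbit G \<alpha> (sel Ob)) (gorbit G \<alpha> a)" "orbit_le r (gorbit G \<alpha> a) (gorbit G \<alpha> (sel Ob))"
          using sel[OF Ob] po_refl[OF po_OP Ob] unfolding Ob_def by auto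
        then have "s (F Ob) (f a)" "s (f a) (F Ob)" using iso sel[OF Ob] a(1) unfolding F_def by blast+
        then have "F Ob = f a" using po_antisym[OF poQ] FQ Ob fQ a(1) by blast
        then show "q \<in> F ` OP" using Ob a by (metis image_eqI)
      qed
    qed
  qed
  have "poset_topology OP (orbit_le r) homeomorphic_space poset_topology Q s"
  proof (rule iso_homeo[OF _ _ _ _ bij isoF])
    show "\<forall>y\<in>OP. orbit_le r y y" using po_refl[OF po_OP] by blast
    show "\<forall>x\<in>OP. \<forall>y\<in>OP. \<forall>z\<in>OP. orbit_le r x y \<and> orbit_le r y z \<longrightarrow> orbit_le r x z"
      using po_trans[OF po_OP] by blast
    show "\<forall>y\<in>Q. s y y" using po_refl[OF poQ] by blast
    show "\<forall>x\<in>Q. \<forall>y\<in>Q. \<forall>z\<in>Q. s x y \<and> s y z \<longrightarrow> s x z" using po_trans[OF poQ] by blast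
  qed
  then show ?thesis unfolding orbit_space_def OP_def by (rule homeomorphic_space_contractibility)
qed

context fgp
begin

lemma chain_shift:
  assumes CiCk: "Ci \<subseteq> Ck" and CkY: "Ck \<subseteq> Y" and ch: "\<forall>x\<in>Ck. \<forall>y\<in>Ck. r x y \<or> r y x"
    and gi: "gi \<in> carrier G" and gk: "gk \<in> carrier G"
    and cmp: "(\<lambda>y. \<alpha> y gi) ` Ci \<subseteq> (\<lambda>y. \<alpha> y gk) ` Ck \<or> (\<lambda>y. \<alpha> y gk) ` Ck \<subseteq> (\<lambda>y. \<alpha> y gi) ` Ci"
  shows "\<forall>z\<in>Ci. \<alpha> z gi = \<alpha> z gk"
proof -
  have H1: "z = w" if z: "z \<in> Ck" and w: "w \<in> Ck" and e: "\<alpha> z gi = \<alpha> w gk" for z w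
  proof -
    have zY: "z \<in> Y" and wY: "w \<in> Y" using z w CkY by blast+
    have "w = \<alpha> (\<alpha> w gk) (inv\<^bsub>G\<^esub> gk)" using act_inv[OF wY gk] by simp
    also have "\<dots> = \<alpha> (\<alpha> z gi) (inv\<^bsub>G\<^esub> gk)" using e by simp
    finally have "w \<in> gorbit G \<alpha> (\<alpha> z gi)"
      using orb_mem[OF closed[OF zY gi] group.inv_closed[OF grp gk]] by simp
    then have "w \<in> gorbit G \<alpha> z" using orb_eq[OF zY gi] by simp
    then show ?thesis using orbit_cmp_eq[OF zY] ch z w by metis
  qed
  from cmp show ?thesis
  proof
    assume sub: "(\<lambda>y. \<alpha> y gi) ` Ci \<subseteq> (\<lambda>y. \<alpha> y gk) ` Ck"
    show ?thesis
    proof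
      fix z assume zc: "z \<in> Ci"
      then obtain w where w: "w \<in> Ck" "\<alpha> z gi = \<alpha> w gk" using sub by blast
      then show "\<alpha> z gi = \<alpha> z gk" using H1[OF _ w(1) w(2)] zc CiCk by blast
    qed
  next
    assume sub: "(\<lambda>y. \<alpha> y gk) ` Ck \<subseteq> (\<lambda>y. \<alpha> y gi) ` Ci"
    show ?thesis
    proof
      fix z assume zc: "z \<in> Ci"
      then have "\<alpha> z gk \<in> (\<lambda>y. \<alpha> y gi) ` Ci" using sub CiCk by blast
      then obtain z' where z': "z' \<in> Ci" "\<alpha> z gk = \<alpha> z' gi" by blast
      have "z' = z" using H1[of z' z] z' zc CiCk by auto
      then show "\<alpha> z gi = \<alpha> z gk" using z' by simp
    qed
  qed
qed

lemma chain_top: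
  assumes "finite c" "c \<noteq> {}" "c \<subseteq> Y" "\<forall>x\<in>c. \<forall>y\<in>c. r x y \<or> r y x"
  shows "\<exists>t\<in>c. \<forall>x\<in>c. r x t"
proof -
  obtain t where t: "t \<in> c" "\<forall>w'\<in>c. r t w' \<longrightarrow> w' = t"
    using finite_maximal[OF assms(1,2,3) po] by blast
  have "r x t" if "x \<in> c" for x
    using t assms(3,4) that refl by blast
  then show ?thesis using t by blast
qed

lemma lift_chain:
  "finite C \<Longrightarrow> C \<noteq> {} \<Longrightarrow> C \<subseteq> OP \<Longrightarrow> (\<forall>A\<in>C. \<forall>B\<in>C. orbit_le r A B \<or> orbit_le r B A) \<Longrightarrow>
   \<exists>c. finite c \<and> c \<noteq> {} \<and> c \<subseteq> Y \<and> (\<forall>x\<in>c. \<forall>y\<in>c. r x y \<or> r y x) \<and> gorbit G \<alpha> ` c = C"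
proof (induction "card C" arbitrary: C rule: less_induct)
  case less
  note fin = less(2) and ne = less(3) and sub = less(4) and ch = less(5)
  obtain M where M: "M \<in> C" "\<forall>w'\<in>C. orbit_le r M w' \<longrightarrow> w' = M"
    using finite_maximal[OF fin ne sub po_OP] by blast
  have Mtop: "orbit_le r A M" if A: "A \<in> C" for A
  proof -
    have "orbit_le r A M \<or> orbit_le r M A" using ch A M(1) by blast
    moreover have "orbit_le r M M" using po_refl[OF po_OP] sub M(1) by blast
    ultimately show ?thesis using M(2) A by metis
  qed
  obtain yM where yM: "yM \<in> Y" "M = gorbit G \<alpha> yM" using M sub by (auto simp: OP_def)
  show ?case
  proof (cases "C = {M}")
    case True
    have "finite {yM}" "{yM} \<noteq> {}" "{yM} \<subseteq> Y" "\<forall>x\<in>{yM}. \<forall>y\<in>{yM}. r x y \<or> r y x"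
      "gorbit G \<alpha> ` {yM} = C" using True yM refl by auto
    then show ?thesis by blast
  next
    case False
    define C' where "C' = C - {M}"
    have ne': "C' \<noteq> {}" using False M ne by (auto simp: C'_def)
    have "card C > 0" using fin ne card_gt_0_iff by blast
    then have card': "card C' < card C" using fin M by (simp add: C'_def)
    have fin': "finite C'" using fin by (simp add: C'_def)
    have sub': "C' \<subseteq> OP" using sub by (auto simp: C'_def)
    have ch': "\<forall>A\<in>C'. \<forall>B\<in>C'. orbit_le r A B \<or> orbit_le r B A" using ch by (simp add: C'_def)
    obtain c' where c': "finite c'" "c' \<noteq> {}" "c' \<subseteq> Y" "\<forall>x\<in>c'. \<forall>y\<in>c'. r x y \<or> r y x"
      "gorbit G \<alpha> ` c' = C'"
      using less(1)[OF card' fin' ne' sub' ch'] by blast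
    obtain t where t: "t \<in> c'" "\<forall>x\<in>c'. r x t" using chain_top[OF c'(1-4)] by blast
    have tY: "t \<in> Y" using t c' by blast
    have "gorbit G \<alpha> t \<in> C" using c'(5) t(1) by (auto simp: C'_def)
    then have "orbit_le r (gorbit G \<alpha> t) M" by (rule Mtop)
    then obtain a b where ab: "a \<in> gorbit G \<alpha> t" "b \<in> M" "r a b" unfolding orbit_le_def by blast
    obtain g where g: "g \<in> carrier G" "a = \<alpha> t g" using ab(1) unfolding gorbit_def by blast
    have ig: "inv\<^bsub>G\<^esub> g \<in> carrier G" using group.inv_closed[OF grp g(1)] .
    have bY: "b \<in> Y" using ab(2) yM orb_sub by blast
    have aY: "a \<in> Y" using g closed tY by blast
    define m where "m = \<alpha> b (inv\<^bsub>G\<^esub> g)"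
    have mY: "m \<in> Y" using closed[OF bY ig] by (simp add: m_def)
    have "r (\<alpha> a (inv\<^bsub>G\<^esub> g)) m" using mono[OF aY bY ig ab(3)] by (simp add: m_def)
    then have tm: "r t m" using act_inv[OF tY g(1)] g(2) by simp
    have gm: "gorbit G \<alpha> m = M"
    proof -
      have "gorbit G \<alpha> m = gorbit G \<alpha> b" unfolding m_def by (rule orb_eq[OF bY ig])
      also have "\<dots> = M" using orb_eq'[OF yM(1)] ab(2) yM(2) by simp
      finally show ?thesis .
    qed
    show ?thesis
    proof (rule exI[of _ "insert m c'"], intro conjI)
      show "finite (insert m c')" "insert m c' \<noteq> {}" "insert m c' \<subseteq> Y" using c' mY by auto
      show "\<forall>x\<in>insert m c'. \<forall>y\<in>insert m c'. r x y \<or> r y x"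
      proof (intro ballI)
        fix x y assume x: "x \<in> insert m c'" and y: "y \<in> insert m c'"
        have xm: "r z m" if "z \<in> c'" for z
          using trans[OF _ tY mY t(2)[rule_format, OF that] tm] that c'(3) by blast
        show "r x y \<or> r y x" using x y xm c'(4) refl[OF mY] by auto
      qed
      show "gorbit G \<alpha> ` insert m c' = C" using gm c'(5) M by (auto simp: C'_def)
    qed
  qed
qed

end

definition subd :: "'a sdv set \<Rightarrow> ('a \<Rightarrow> 'a \<Rightarrow> bool) \<Rightarrow> 'a sdv set" where
  "subd Y leq = {Chn c | c. fset c \<noteq> {} \<and> fset c \<subseteq> Y \<and>
                 (\<forall>x\<in>fset c. \<forall>y\<in>fset c. sdle leq x y \<or> sdle leq y x)}"

lemma sdiv_Suc': "sdiv (Suc n) X leq = subd (sdiv n X leq) leq"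
  by (simp add: subd_def)

lemma sdle_Chn: "sdle leq (Chn c) (Chn d) \<longleftrightarrow> fset c \<subseteq> fset d"
  by (simp add: less_eq_fset.rep_eq)

lemma sdact_Chn_fset: "sdact act (Chn c) g = Chn (Abs_fset ((\<lambda>y. sdact act y g) ` fset c))"
  by (simp add: fimage_def)

lemma fset_fimage: "fset ((\<lambda>y. sdact act y g) |`| c) = (\<lambda>y. sdact act y g) ` fset c"
  by (simp add: fimage.rep_eq)

lemma subd_fgp:
  assumes fg: "finite_G_poset G Y (sdle leq) (sdact act)"
  shows "finite_G_poset G (subd Y leq) (sdle leq) (sdact act)"
proof -
  interpret fgp G Y "sdle leq" "sdact act" by (rule fgp.intro[OF fg])
  let ?Y1 = "subd Y leq"
  have mem: "x \<in> ?Y1 \<longleftrightarrow> (\<exists>c. x = Chn c \<and> fset c \<noteq> {} \<and> fset c \<subseteq> Y \<and>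
                 (\<forall>x\<in>fset c. \<forall>y\<in>fset c. sdle leq x y \<or> sdle leq y x))" for x
    by (auto simp: subd_def)
  have fin: "finite ?Y1"
  proof -
    have "finite (fset -` Pow Y)"
      by (rule finite_vimageI) (use finY in \<open>auto simp: inj_def fset_inject\<close>)
    then have "finite (Chn ` (fset -` Pow Y))" by simp
    moreover have "?Y1 \<subseteq> Chn ` (fset -` Pow Y)" by (auto simp: subd_def)
    ultimately show ?thesis by (rule finite_subset[rotated])
  qed
  have act_Chn: "sdact act (Chn c) g \<in> ?Y1" if "Chn c \<in> ?Y1" "g \<in> carrier G" for c g
  proof -
    have c: "fset c \<noteq> {}" "fset c \<subseteq> Y" "\<forall>x\<in>fset c. \<forall>y\<in>fset c. sdle leq x y \<or> sdle leq y x"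
      using that(1) by (auto simp: subd_def)
    let ?d = "(\<lambda>y. sdact act y g) |`| c"
    have d1: "fset ?d \<noteq> {}" using c(1) by (simp add: fset_fimage)
    have d2: "fset ?d \<subseteq> Y" using c(2) closed[OF _ that(2)] by (auto simp: fset_fimage)
    have d3: "\<forall>x\<in>fset ?d. \<forall>y\<in>fset ?d. sdle leq x y \<or> sdle leq y x"
    proof (intro ballI)
      fix x y assume "x \<in> fset ?d" "y \<in> fset ?d"
      then obtain x0 y0 where "x0 \<in> fset c" "y0 \<in> fset c" "x = sdact act x0 g" "y = sdact act y0 g"
        by (auto simp: fset_fimage)
      then show "sdle leq x y \<or> sdle leq y x" using c(2,3) mono[OF _ _ that(2)] by blast
    qed
    have "sdact act (Chn c) g = Chn ?d" by simp
    then show ?thesis unfolding mem using d1 d2 d3 by blast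
  qed
  show ?thesis
    unfolding finite_G_poset_def
  proof (intro conjI ballI impI)
    show "group G" by (rule grp)
    show "finite (carrier G)" by (rule finG)
    show "finite ?Y1" by (rule fin)
  next
    fix x assume "x \<in> ?Y1" then obtain c where "x = Chn c" by (auto simp: subd_def)
    then show "sdle leq x x" by simp
  next
    fix x y assume x: "x \<in> ?Y1" and y: "y \<in> ?Y1" and le: "sdle leq x y \<and> sdle leq y x"
    obtain c where c: "x = Chn c" using x by (auto simp: subd_def)
    obtain d where d: "y = Chn d" using y by (auto simp: subd_def)
    have "fset c = fset d" using le c d sdle_Chn by blast
    then show "x = y" using c d by (simp add: fset_inject)
  next
    fix x y z assume x: "x \<in> ?Y1" and y: "y \<in> ?Y1" and z: "z \<in> ?Y1" and le: "sdle leq x y \<and> sdle leq y z"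
    obtain c where c: "x = Chn c" using x by (auto simp: subd_def)
    obtain d where d: "y = Chn d" using y by (auto simp: subd_def)
    obtain e where e: "z = Chn e" using z by (auto simp: subd_def)
    have "fset c \<subseteq> fset d" "fset d \<subseteq> fset e" using le c d e sdle_Chn by blast+
    then show "sdle leq x z" using c e sdle_Chn by blast
  next
    fix x g assume x: "x \<in> ?Y1" and g: "g \<in> carrier G"
    obtain c where c: "x = Chn c" using x by (auto simp: subd_def)
    show "sdact act x g \<in> ?Y1" using act_Chn[OF x[unfolded c] g] c by simp
  next
    fix x assume "x \<in> ?Y1"
    then obtain c where c: "x = Chn c" "fset c \<subseteq> Y" by (auto simp: subd_def)
    have "(\<lambda>y. sdact act y \<one>\<^bsub>G\<^esub>) |`| c = c"
    proof -
      have "fset ((\<lambda>y. sdact act y \<one>\<^bsub>G\<^esub>) |`| c) = fset c"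
        unfolding fset_fimage using act1 c(2) by (auto simp: image_iff) (metis subsetD)
      then show ?thesis by (metis fset_inject)
    qed
    then show "sdact act x \<one>\<^bsub>G\<^esub> = x" using c by simp
  next
    fix x g h assume x: "x \<in> ?Y1" and g: "g \<in> carrier G" and h: "h \<in> carrier G"
    then obtain c where c: "x = Chn c" "fset c \<subseteq> Y" by (auto simp: subd_def)
    have "(\<lambda>y. sdact act y (g \<otimes>\<^bsub>G\<^esub> h)) |`| c = (\<lambda>y. sdact act y h) |`| ((\<lambda>y. sdact act y g) |`| c)"
    proof -
      have "fset ((\<lambda>y. sdact act y (g \<otimes>\<^bsub>G\<^esub> h)) |`| c) = fset ((\<lambda>y. sdact act y h) |`| ((\<lambda>y. sdact act y g) |`| c))"
        unfolding fset_fimage image_image using actm[OF _ g h] c(2) by (auto intro!: image_cong)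
      then show ?thesis by (metis fset_inject)
    qed
    then show "sdact act x (g \<otimes>\<^bsub>G\<^esub> h) = sdact act (sdact act x g) h" using c by simp
  next
    fix x y g assume x: "x \<in> ?Y1" and y: "y \<in> ?Y1" and g: "g \<in> carrier G" and le: "sdle leq x y"
    obtain c where c: "x = Chn c" using x by (auto simp: subd_def)
    obtain d where d: "y = Chn d" using y by (auto simp: subd_def)
    have "fset c \<subseteq> fset d" using le c d sdle_Chn by metis
    then show "sdle leq (sdact act x g) (sdact act y g)"
      using c d by (simp add: less_eq_fset.rep_eq fset_fimage) blast
  qed
qed

lemma subd_propB:
  fixes G :: "('b, 'm) monoid_scheme" and Y :: "'a sdv set" and act :: "'a \<Rightarrow> 'b \<Rightarrow> 'a"
  assumes fg: "finite_G_poset G Y (sdle leq) (sdact act)"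
  shows "propB G (subd Y leq) (sdle leq) (sdact act)"
  unfolding propB_def
proof (intro allI impI)
  interpret fgp G Y "sdle leq" "sdact act" by (rule fgp.intro[OF fg])
  interpret Y1: fgp G "subd Y leq" "sdle leq" "sdact act" by (rule fgp.intro[OF subd_fgp[OF fg]])
  fix n :: nat and v :: "nat \<Rightarrow> 'a sdv" and gs :: "nat \<Rightarrow> 'b"
  assume H: "(\<forall>i\<le>n. v i \<in> subd Y leq \<and> gs i \<in> carrier G) \<and>
        (\<forall>i\<le>n. \<forall>j\<le>n. sdle leq (v i) (v j) \<or> sdle leq (v j) (v i)) \<and>
        (\<forall>i\<le>n. \<forall>j\<le>n. sdle leq (sdact act (v i) (gs i)) (sdact act (v j) (gs j)) \<or>
                        sdle leq (sdact act (v j) (gs j)) (sdact act (v i) (gs i)))"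
  have vY: "\<forall>i\<le>n. v i \<in> subd Y leq" and gsG: "\<forall>i\<le>n. gs i \<in> carrier G" using H by blast+
  have ch: "\<forall>i\<le>n. \<forall>j\<le>n. sdle leq (v i) (v j) \<or> sdle leq (v j) (v i)" using H by blast
  have ch2: "\<forall>i\<le>n. \<forall>j\<le>n. sdle leq (sdact act (v i) (gs i)) (sdact act (v j) (gs j)) \<or>
                        sdle leq (sdact act (v j) (gs j)) (sdact act (v i) (gs i))" using H by blast
  have "\<forall>m\<le>n. \<exists>k\<le>m. \<forall>i\<le>m. sdle leq (v i) (v k)"
  proof (intro allI impI)
    fix m assume "m \<le> n"
    then show "\<exists>k\<le>m. \<forall>i\<le>m. sdle leq (v i) (v k)"
    proof (induction m)
      case 0 then show ?case using Y1.refl vY by auto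
    next
      case (Suc m)
      then obtain k where k: "k \<le> m" "\<forall>i\<le>m. sdle leq (v i) (v k)" by auto
      have kn: "k \<le> n" and sn: "Suc m \<le> n" using k Suc by auto
      show ?case
      proof (cases "sdle leq (v k) (v (Suc m))")
        case True
        have "\<forall>i\<le>Suc m. sdle leq (v i) (v (Suc m))"
        proof (intro allI impI)
          fix i assume i: "i \<le> Suc m"
          show "sdle leq (v i) (v (Suc m))"
          proof (cases "i = Suc m")
            case True then show ?thesis using Y1.refl vY sn by auto
          next
            case False
            then have "i \<le> m" using i by auto
            then show ?thesis using Y1.trans[of "v i" "v k" "v (Suc m)"] vY k True kn sn by auto
          qed
        qed
        then show ?thesis by blast
      next
        case False
        then have "sdle leq (v (Suc m)) (v k)" using ch kn sn by blast
        then have "\<forall>i\<le>Suc m. sdle leq (v i) (v k)" using k by (auto simp: le_Suc_eq)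
        moreover have "k \<le> Suc m" using k by simp
        ultimately show ?thesis by blast
      qed
    qed
  qed
  then obtain k where k: "k \<le> n" "\<forall>i\<le>n. sdle leq (v i) (v k)" by blast
  have "\<forall>i\<le>n. sdact act (v i) (gs i) = sdact act (v i) (gs k)"
  proof (intro allI impI)
    fix i assume i: "i \<le> n"
    obtain ci where ci: "v i = Chn ci" "fset ci \<subseteq> Y" using vY i by (auto simp: subd_def)
    obtain ck where ck: "v k = Chn ck" "fset ck \<subseteq> Y"
      "\<forall>x\<in>fset ck. \<forall>y\<in>fset ck. sdle leq x y \<or> sdle leq y x" using vY k(1) by (auto simp: subd_def)
    have sub: "fset ci \<subseteq> fset ck" using k i ci ck sdle_Chn by metis
    have "sdle leq (sdact act (v i) (gs i)) (sdact act (v k) (gs k)) \<or>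
          sdle leq (sdact act (v k) (gs k)) (sdact act (v i) (gs i))" using ch2 i k(1) by blast
    then have cmp: "(\<lambda>y. sdact act y (gs i)) ` fset ci \<subseteq> (\<lambda>y. sdact act y (gs k)) ` fset ck \<or>
          (\<lambda>y. sdact act y (gs k)) ` fset ck \<subseteq> (\<lambda>y. sdact act y (gs i)) ` fset ci"
      using ci(1) ck(1) by (simp add: less_eq_fset.rep_eq fset_fimage)
    have eq: "\<forall>z\<in>fset ci. sdact act z (gs i) = sdact act z (gs k)"
      by (rule chain_shift[OF sub ck(2) ck(3) _ _ cmp]) (use gsG i k(1) in auto)
    have "(\<lambda>y. sdact act y (gs i)) |`| ci = (\<lambda>y. sdact act y (gs k)) |`| ci"
    proof -
      have "fset ((\<lambda>y. sdact act y (gs i)) |`| ci) = fset ((\<lambda>y. sdact act y (gs k)) |`| ci)"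
        unfolding fset_fimage by (rule image_cong) (use eq in auto)
      then show ?thesis by (metis fset_inject)
    qed
    then show "sdact act (v i) (gs i) = sdact act (v i) (gs k)" using ci(1) by simp
  qed
  then show "\<exists>g\<in>carrier G. \<forall>i\<le>n. sdact act (v i) (gs i) = sdact act (v i) g"
    using gsG k(1) by blast
qed

lemma subd_iso:
  fixes G :: "('b, 'm) monoid_scheme" and Y :: "'a sdv set" and act :: "'a \<Rightarrow> 'b \<Rightarrow> 'a"
  assumes fg: "finite_G_poset G Y (sdle leq) (sdact act)" and pB: "propB G Y (sdle leq) (sdact act)"
  shows "contractible_space (orbit_space G (sdact act) (subd Y leq) (sdle leq)) \<longleftrightarrow>
         contractible_space (poset_topology (chs (gorbit G (sdact act) ` Y) (orbit_le (sdle leq))) (\<subseteq>))"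
proof -
  interpret fgp G Y "sdle leq" "sdact act" by (rule fgp.intro[OF fg])
  interpret Y1: fgp G "subd Y leq" "sdle leq" "sdact act" by (rule fgp.intro[OF subd_fgp[OF fg]])
  define f where "f = (\<lambda>z. case z of Chn c \<Rightarrow> gorbit G (sdact act) ` fset c | Pt a \<Rightarrow> {})"
  have fC: "f (Chn c) = gorbit G (sdact act) ` fset c" for c by (simp add: f_def)
  let ?Q = "chs OP (orbit_le (sdle leq))"
  have mem: "x \<in> subd Y leq \<longleftrightarrow> (\<exists>c. x = Chn c \<and> fset c \<noteq> {} \<and> fset c \<subseteq> Y \<and>
                 (\<forall>x\<in>fset c. \<forall>y\<in>fset c. sdle leq x y \<or> sdle leq y x))" for x
    by (auto simp: subd_def)
  have fQ: "\<forall>y\<in>subd Y leq. f y \<in> ?Q"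
  proof
    fix y assume "y \<in> subd Y leq"
    then obtain c where c: "y = Chn c" "fset c \<noteq> {}" "fset c \<subseteq> Y"
      "\<forall>x\<in>fset c. \<forall>y\<in>fset c. sdle leq x y \<or> sdle leq y x" unfolding mem by blast
    have "\<forall>A\<in>f y. \<forall>B\<in>f y. orbit_le (sdle leq) A B \<or> orbit_le (sdle leq) B A"
    proof (intro ballI)
      fix A B assume "A \<in> f y" "B \<in> f y"
      then obtain x z where xz: "x \<in> fset c" "z \<in> fset c" "A = gorbit G (sdact act) x" "B = gorbit G (sdact act) z"
        using c(1) fC by auto
      have xY: "x \<in> Y" and zY: "z \<in> Y" using xz c(3) by blast+
      have "sdle leq x z \<or> sdle leq z x" using c(4) xz(1,2) by blast
      then show "orbit_le (sdle leq) A B \<or> orbit_le (sdle leq) B A"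
        using le_orbit_le[OF xY zY] le_orbit_le[OF zY xY] xz(3,4) by blast
    qed
    moreover have "f y \<noteq> {}" "f y \<subseteq> OP" using c by (auto simp: fC OP_def)
    ultimately show "f y \<in> ?Q" unfolding chs_def by blast
  qed
  have surj: "?Q \<subseteq> f ` subd Y leq"
  proof
    fix C assume C: "C \<in> ?Q"
    have Cp: "finite C" "C \<noteq> {}" "C \<subseteq> OP" "\<forall>A\<in>C. \<forall>B\<in>C. orbit_le (sdle leq) A B \<or> orbit_le (sdle leq) B A"
      using C finOP finite_subset unfolding chs_def by blast+
    obtain c where c: "finite c" "c \<noteq> {}" "c \<subseteq> Y" "\<forall>x\<in>c. \<forall>y\<in>c. sdle leq x y \<or> sdle leq y x"
      "gorbit G (sdact act) ` c = C" using lift_chain[OF Cp] by blast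
    have fs: "fset (Abs_fset c) = c" using c(1) by (simp add: Abs_fset_inverse)
    have "Chn (Abs_fset c) \<in> subd Y leq" unfolding mem using c fs by auto
    moreover have "f (Chn (Abs_fset c)) = C" using fs c(5) by (simp add: fC)
    ultimately show "C \<in> f ` subd Y leq" by (metis image_eqI)
  qed
  have iso: "\<forall>a\<in>subd Y leq. \<forall>b\<in>subd Y leq.
     orbit_le (sdle leq) (gorbit G (sdact act) a) (gorbit G (sdact act) b) \<longleftrightarrow> f a \<subseteq> f b"
  proof (intro ballI)
    fix a b assume a: "a \<in> subd Y leq" and b: "b \<in> subd Y leq"
    obtain c where c: "a = Chn c" "fset c \<noteq> {}" "fset c \<subseteq> Y"
      "\<forall>x\<in>fset c. \<forall>y\<in>fset c. sdle leq x y \<or> sdle leq y x" using a unfolding mem by blast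
    obtain d where d: "b = Chn d" "fset d \<noteq> {}" "fset d \<subseteq> Y"
      "\<forall>x\<in>fset d. \<forall>y\<in>fset d. sdle leq x y \<or> sdle leq y x" using b unfolding mem by blast
    show "orbit_le (sdle leq) (gorbit G (sdact act) a) (gorbit G (sdact act) b) \<longleftrightarrow> f a \<subseteq> f b"
    proof
      assume "orbit_le (sdle leq) (gorbit G (sdact act) a) (gorbit G (sdact act) b)"
      then obtain a' b' where ab: "a' \<in> gorbit G (sdact act) a" "b' \<in> gorbit G (sdact act) b" "sdle leq a' b'"
        unfolding orbit_le_def by blast
      obtain g where g: "g \<in> carrier G" "a' = sdact act a g" using ab(1) unfolding gorbit_def by blast
      obtain h where h: "h \<in> carrier G" "b' = sdact act b h" using ab(2) unfolding gorbit_def by blast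
      have sub: "(\<lambda>y. sdact act y g) ` fset c \<subseteq> (\<lambda>y. sdact act y h) ` fset d"
        using ab(3) g(2) h(2) c(1) d(1) by (simp add: less_eq_fset.rep_eq fset_fimage)
      show "f a \<subseteq> f b"
      proof
        fix A assume "A \<in> f a"
        then obtain x where x: "x \<in> fset c" "A = gorbit G (sdact act) x" using c(1) fC by auto
        obtain w where w: "w \<in> fset d" "sdact act x g = sdact act w h" using sub x(1) by blast
        have xY: "x \<in> Y" and wY: "w \<in> Y" using x(1) w(1) c(3) d(3) by blast+
        have "A = gorbit G (sdact act) (sdact act x g)" using orb_eq[OF xY g(1)] x(2) by simp
        also have "\<dots> = gorbit G (sdact act) w" using w(2) orb_eq[OF wY h(1)] by simp
        finally show "A \<in> f b" using w(1) d(1) fC by auto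
      qed
    next
      assume sub: "f a \<subseteq> f b"
      obtain xs where xs: "set xs = fset c" using finite_list[of "fset c"] by auto
      define n where "n = length xs - 1"
      define v where "v = (\<lambda>i. xs ! i)"
      have xsne: "xs \<noteq> []" using xs c(2) by auto
      have vin: "v i \<in> fset c" if "i \<le> n" for i
      proof -
        have "i < length xs" using that xsne unfolding n_def by (cases xs) auto
        then have "xs ! i \<in> set xs" by (rule nth_mem)
        then show ?thesis using xs by (simp add: v_def)
      qed
      have vall: "\<exists>i\<le>n. v i = y" if "y \<in> fset c" for y
      proof -
        have "y \<in> set xs" using that xs by simp
        then obtain i where i: "i < length xs" "xs ! i = y" by (auto simp: in_set_conv_nth)
        then have "i \<le> n" unfolding n_def by linarith
        then show ?thesis using i(2) unfolding v_def by blast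
      qed
      have "\<forall>i. \<exists>g. i \<le> n \<longrightarrow> g \<in> carrier G \<and> sdact act (v i) g \<in> fset d"
      proof (intro allI)
        fix i
        show "\<exists>g. i \<le> n \<longrightarrow> g \<in> carrier G \<and> sdact act (v i) g \<in> fset d"
        proof (cases "i \<le> n")
          case True
          have viY: "v i \<in> Y" using vin[OF True] c(3) by blast
          have "gorbit G (sdact act) (v i) \<in> f a" using vin[OF True] c(1) fC by auto
          then have "gorbit G (sdact act) (v i) \<in> f b" using sub by blast
          then obtain w where w: "w \<in> fset d" "gorbit G (sdact act) (v i) = gorbit G (sdact act) w"
            using d(1) fC by auto
          have "w \<in> gorbit G (sdact act) (v i)" using w orb_self d(3) by auto
          then obtain g where "g \<in> carrier G" "w = sdact act (v i) g" unfolding gorbit_def by blast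
          then show ?thesis using w(1) by blast
        qed simp
      qed
      from choice[OF this] obtain gs where gs: "\<forall>i. i \<le> n \<longrightarrow> gs i \<in> carrier G \<and> sdact act (v i) (gs i) \<in> fset d"
        by blast
      have "\<exists>g\<in>carrier G. \<forall>i\<le>n. sdact act (v i) (gs i) = sdact act (v i) g"
      proof -
        have h1: "\<forall>i\<le>n. v i \<in> Y \<and> gs i \<in> carrier G" using vin c(3) gs by blast
        have h2: "\<forall>i\<le>n. \<forall>j\<le>n. sdle leq (v i) (v j) \<or> sdle leq (v j) (v i)" using vin c(4) by blast
        have h3: "\<forall>i\<le>n. \<forall>j\<le>n. sdle leq (sdact act (v i) (gs i)) (sdact act (v j) (gs j)) \<or>
                        sdle leq (sdact act (v j) (gs j)) (sdact act (v i) (gs i))" using gs d(4) by blast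
        have "(\<forall>i\<le>n. v i \<in> Y \<and> gs i \<in> carrier G) \<and>
          (\<forall>i\<le>n. \<forall>j\<le>n. sdle leq (v i) (v j) \<or> sdle leq (v j) (v i)) \<and>
          (\<forall>i\<le>n. \<forall>j\<le>n. sdle leq (sdact act (v i) (gs i)) (sdact act (v j) (gs j)) \<or>
                        sdle leq (sdact act (v j) (gs j)) (sdact act (v i) (gs i)))"
          using h1 h2 h3 by (intro conjI)
        moreover have "\<forall>(n::nat) (v::nat \<Rightarrow> 'a sdv) (gs::nat \<Rightarrow> 'b).
        (\<forall>i\<le>n. v i \<in> Y \<and> gs i \<in> carrier G) \<and>
        (\<forall>i\<le>n. \<forall>j\<le>n. sdle leq (v i) (v j) \<or> sdle leq (v j) (v i)) \<and>
        (\<forall>i\<le>n. \<forall>j\<le>n. sdle leq (sdact act (v i) (gs i)) (sdact act (v j) (gs j)) \<or>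
                        sdle leq (sdact act (v j) (gs j)) (sdact act (v i) (gs i)))
        \<longrightarrow> (\<exists>g\<in>carrier G. \<forall>i\<le>n. sdact act (v i) (gs i) = sdact act (v i) g)"
          using pB unfolding propB_def .
        ultimately show ?thesis by (elim allE[of _ n] allE[of _ v] allE[of _ gs]) (erule mp)
      qed
      then obtain g where g: "g \<in> carrier G" "\<forall>i\<le>n. sdact act (v i) (gs i) = sdact act (v i) g" by blast
      have "\<forall>y\<in>fset c. sdact act y g \<in> fset d"
      proof
        fix y assume "y \<in> fset c"
        then obtain i where i: "i \<le> n" "v i = y" using vall by blast
        have "sdact act (v i) (gs i) \<in> fset d" using gs i(1) by blast
        then show "sdact act y g \<in> fset d" using g(2) i by auto
      qed
      then have "sdle leq (sdact act a g) b" using c(1) d(1) by (auto simp: less_eq_fset.rep_eq fset_fimage)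
      moreover have "sdact act a g \<in> gorbit G (sdact act) a" using g(1) unfolding gorbit_def by blast
      moreover have "b \<in> gorbit G (sdact act) b" using Y1.orb_self b by blast
      ultimately show "orbit_le (sdle leq) (gorbit G (sdact act) a) (gorbit G (sdact act) b)"
        unfolding orbit_le_def by blast
    qed
  qed
  have "contractible_space (orbit_space G (sdact act) (subd Y leq) (sdle leq)) \<longleftrightarrow>
        contractible_space (poset_topology ?Q (\<subseteq>))"
    by (rule orbit_iso[OF subd_fgp[OF fg] po_chs fQ surj iso])
  then show ?thesis by (simp add: OP_def)
qed

lemma pt_fgp:
  fixes G :: "('b, 'm) monoid_scheme" and X :: "'a set" and act :: "'a \<Rightarrow> 'b \<Rightarrow> 'a"
  assumes fg: "finite_G_poset G X leq act"
  shows "finite_G_poset G (Pt ` X) (sdle leq) (sdact act)"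
proof -
  interpret fgp G X leq act by (rule fgp.intro[OF fg])
  show ?thesis
    unfolding finite_G_poset_def
  proof (intro conjI ballI impI)
    show "group G" by (rule grp)
    show "finite (carrier G)" by (rule finG)
    show "finite (Pt ` X)" using finY by simp
  next
    fix x assume "x \<in> Pt ` X" then obtain a where "x = Pt a" "a \<in> X" by blast
    then show "sdle leq x x" using refl by simp
  next
    fix x y assume x: "x \<in> Pt ` X" and y: "y \<in> Pt ` X" and le: "sdle leq x y \<and> sdle leq y x"
    obtain a where a: "x = Pt a" "a \<in> X" using x by blast
    obtain b where b: "y = Pt b" "b \<in> X" using y by blast
    show "x = y" using antisym[OF a(2) b(2)] le a(1) b(1) by simp
  next
    fix x y z assume x: "x \<in> Pt ` X" and y: "y \<in> Pt ` X" and z: "z \<in> Pt ` X"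
      and le: "sdle leq x y \<and> sdle leq y z"
    obtain a where a: "x = Pt a" "a \<in> X" using x by blast
    obtain b where b: "y = Pt b" "b \<in> X" using y by blast
    obtain c where c: "z = Pt c" "c \<in> X" using z by blast
    show "sdle leq x z" using trans[OF a(2) b(2) c(2)] le a(1) b(1) c(1) by simp
  next
    fix x g assume x: "x \<in> Pt ` X" and g: "g \<in> carrier G"
    obtain a where a: "x = Pt a" "a \<in> X" using x by blast
    show "sdact act x g \<in> Pt ` X" using closed[OF a(2) g] a(1) by simp
  next
    fix x assume x: "x \<in> Pt ` X"
    obtain a where a: "x = Pt a" "a \<in> X" using x by blast
    show "sdact act x \<one>\<^bsub>G\<^esub> = x" using act1[OF a(2)] a(1) by simp
  next
    fix x g h assume x: "x \<in> Pt ` X" and g: "g \<in> carrier G" and h: "h \<in> carrier G"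
    obtain a where a: "x = Pt a" "a \<in> X" using x by blast
    show "sdact act x (g \<otimes>\<^bsub>G\<^esub> h) = sdact act (sdact act x g) h" using actm[OF a(2) g h] a(1) by simp
  next
    fix x y g assume x: "x \<in> Pt ` X" and y: "y \<in> Pt ` X" and g: "g \<in> carrier G" and le: "sdle leq x y"
    obtain a where a: "x = Pt a" "a \<in> X" using x by blast
    obtain b where b: "y = Pt b" "b \<in> X" using y by blast
    show "sdle leq (sdact act x g) (sdact act y g)" using mono[OF a(2) b(2) g] le a(1) b(1) by simp
  qed
qed

definition unPt :: "'a sdv \<Rightarrow> 'a" where
  "unPt z = (case z of Pt a \<Rightarrow> a | Chn _ \<Rightarrow> undefined)"

lemma unPt_Pt [simp]: "unPt (Pt a) = a" by (simp add: unPt_def)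

lemma pt_propB:
  fixes G :: "('b, 'm) monoid_scheme" and X :: "'a set" and act :: "'a \<Rightarrow> 'b \<Rightarrow> 'a"
  assumes pB: "propB G X leq act"
  shows "propB G (Pt ` X) (sdle leq) (sdact act)"
  unfolding propB_def
proof (intro allI impI)
  fix n :: nat and v :: "nat \<Rightarrow> 'a sdv" and gs :: "nat \<Rightarrow> 'b"
  assume H: "(\<forall>i\<le>n. v i \<in> Pt ` X \<and> gs i \<in> carrier G) \<and>
        (\<forall>i\<le>n. \<forall>j\<le>n. sdle leq (v i) (v j) \<or> sdle leq (v j) (v i)) \<and>
        (\<forall>i\<le>n. \<forall>j\<le>n. sdle leq (sdact act (v i) (gs i)) (sdact act (v j) (gs j)) \<or>
                        sdle leq (sdact act (v j) (gs j)) (sdact act (v i) (gs i)))"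
  have H1: "\<forall>i\<le>n. v i \<in> Pt ` X \<and> gs i \<in> carrier G" using H by blast
  have H2: "\<forall>i\<le>n. \<forall>j\<le>n. sdle leq (v i) (v j) \<or> sdle leq (v j) (v i)" using H by blast
  have H3: "\<forall>i\<le>n. \<forall>j\<le>n. sdle leq (sdact act (v i) (gs i)) (sdact act (v j) (gs j)) \<or>
                        sdle leq (sdact act (v j) (gs j)) (sdact act (v i) (gs i))" using H by blast
  define u where "u = (\<lambda>i. unPt (v i))"
  have vu: "v i = Pt (u i) \<and> u i \<in> X" if "i \<le> n" for i
  proof -
    have "v i \<in> Pt ` X" using H1 that by blast
    then obtain a where "v i = Pt a" "a \<in> X" by blast
    then show ?thesis by (simp add: u_def)
  qed
  have "(\<forall>i\<le>n. u i \<in> X \<and> gs i \<in> carrier G) \<and>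
        (\<forall>i\<le>n. \<forall>j\<le>n. leq (u i) (u j) \<or> leq (u j) (u i)) \<and>
        (\<forall>i\<le>n. \<forall>j\<le>n. leq (act (u i) (gs i)) (act (u j) (gs j)) \<or>
                        leq (act (u j) (gs j)) (act (u i) (gs i)))"
  proof (intro conjI allI impI)
    fix i assume i: "i \<le> n"
    show "u i \<in> X" using vu[OF i] by blast
    show "gs i \<in> carrier G" using H1 i by blast
  next
    fix i j assume i: "i \<le> n" and j: "j \<le> n"
    have vi: "v i = Pt (u i)" and vj: "v j = Pt (u j)" using vu[OF i] vu[OF j] by blast+
    have "sdle leq (v i) (v j) \<or> sdle leq (v j) (v i)" using H2 i j by blast
    then show "leq (u i) (u j) \<or> leq (u j) (u i)" unfolding vi vj by simp
    have "sdle leq (sdact act (v i) (gs i)) (sdact act (v j) (gs j)) \<or>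
          sdle leq (sdact act (v j) (gs j)) (sdact act (v i) (gs i))" using H3 i j by blast
    then show "leq (act (u i) (gs i)) (act (u j) (gs j)) \<or> leq (act (u j) (gs j)) (act (u i) (gs i))"
      unfolding vi vj by simp
  qed
  moreover have "\<forall>(n::nat) (v::nat \<Rightarrow> 'a) (gs::nat \<Rightarrow> 'b).
        (\<forall>i\<le>n. v i \<in> X \<and> gs i \<in> carrier G) \<and>
        (\<forall>i\<le>n. \<forall>j\<le>n. leq (v i) (v j) \<or> leq (v j) (v i)) \<and>
        (\<forall>i\<le>n. \<forall>j\<le>n. leq (act (v i) (gs i)) (act (v j) (gs j)) \<or>
                        leq (act (v j) (gs j)) (act (v i) (gs i)))
        \<longrightarrow> (\<exists>g\<in>carrier G. \<forall>i\<le>n. act (v i) (gs i) = act (v i) g)"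
    using pB unfolding propB_def .
  ultimately have "\<exists>g\<in>carrier G. \<forall>i\<le>n. act (u i) (gs i) = act (u i) g"
    by (elim allE[of _ n] allE[of _ u] allE[of _ gs]) (erule mp)
  then obtain g where g: "g \<in> carrier G" "\<forall>i\<le>n. act (u i) (gs i) = act (u i) g" by blast
  have "\<forall>i\<le>n. sdact act (v i) (gs i) = sdact act (v i) g"
  proof (intro allI impI)
    fix i assume i: "i \<le> n"
    have vi: "v i = Pt (u i)" using vu[OF i] by blast
    show "sdact act (v i) (gs i) = sdact act (v i) g" unfolding vi using g(2) i by simp
  qed
  then show "\<exists>g\<in>carrier G. \<forall>i\<le>n. sdact act (v i) (gs i) = sdact act (v i) g" using g(1) by blast
qed

lemma pt_iso:
  fixes G :: "('b, 'm) monoid_scheme" and X :: "'a set" and act :: "'a \<Rightarrow> 'b \<Rightarrow> 'a"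
  assumes fg: "finite_G_poset G X leq act"
  shows "contractible_space (orbit_space G (sdact act) (Pt ` X) (sdle leq)) \<longleftrightarrow>
         contractible_space (orbit_space G act X leq)"
proof -
  interpret fgp G X leq act by (rule fgp.intro[OF fg])
  define f where "f = (\<lambda>z. gorbit G act (unPt z))"
  have gP: "gorbit G (sdact act) (Pt a) = Pt ` gorbit G act a" for a
    by (auto simp: gorbit_def)
  have fQ: "\<forall>y\<in>Pt ` X. f y \<in> OP" by (auto simp: f_def OP_def)
  have surj: "OP \<subseteq> f ` Pt ` X" by (auto simp: f_def OP_def image_image)
  have ole: "orbit_le (sdle leq) (Pt ` A) (Pt ` B) \<longleftrightarrow> orbit_le leq A B" for A B
    by (auto simp: orbit_le_def)
  have iso: "\<forall>a\<in>Pt ` X. \<forall>b\<in>Pt ` X. orbit_le (sdle leq) (gorbit G (sdact act) a) (gorbit G (sdact act) b)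
      \<longleftrightarrow> orbit_le leq (f a) (f b)"
    by (auto simp: gP ole f_def)
  have "contractible_space (orbit_space G (sdact act) (Pt ` X) (sdle leq)) \<longleftrightarrow>
        contractible_space (poset_topology OP (orbit_le leq))"
    by (rule orbit_iso[OF pt_fgp[OF fg] po_OP fQ surj iso])
  then show ?thesis by (simp add: orbit_space_def OP_def)
qed

theorem corollary2p11:
  fixes G :: "('g, 'm) monoid_scheme" and X :: "'a set"
    and leq :: "'a \<Rightarrow> 'a \<Rightarrow> bool" and act :: "'a \<Rightarrow> 'g \<Rightarrow> 'a" and n :: nat
  assumes "finite_G_poset G X leq act" and "n \<ge> 1"
  shows "(contractible_space (orbit_space G (sdact act) (sdiv n X leq) (sdle leq))
            \<longleftrightarrow> contractible_space (orbit_space G (sdact act) (sdiv 1 X leq) (sdle leq)))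
       \<and> (propB G X leq act \<longrightarrow>
           (contractible_space (orbit_space G (sdact act) (sdiv n X leq) (sdle leq))
              \<longleftrightarrow> contractible_space (orbit_space G act X leq)))"
proof -
  note fgX = assms(1)
  have FG: "finite_G_poset G (sdiv k X leq) (sdle leq) (sdact act)" for k
  proof (induction k)
    case 0 then show ?case using pt_fgp[OF fgX] by simp
  next
    case (Suc k) then show ?case unfolding sdiv_Suc' by (rule subd_fgp)
  qed
  have PB: "propB G (sdiv (Suc m) X leq) (sdle leq) (sdact act)" for m
    unfolding sdiv_Suc' by (rule subd_propB[OF FG])
  define P where "P = (\<lambda>k. contractible_space (orbit_space G (sdact act) (sdiv k X leq) (sdle leq)))"
  have step: "P (Suc m) \<longleftrightarrow> P m" if pb: "propB G (sdiv m X leq) (sdle leq) (sdact act)" for m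
  proof -
    interpret fgp G "sdiv m X leq" "sdle leq" "sdact act" by (rule fgp.intro[OF FG])
    have "P (Suc m) \<longleftrightarrow> contractible_space (poset_topology (chs OP (orbit_le (sdle leq))) (\<subseteq>))"
      unfolding P_def sdiv_Suc' OP_def by (rule subd_iso[OF FG pb])
    also have "\<dots> \<longleftrightarrow> ccontr (chs OP (orbit_le (sdle leq))) (\<subseteq>)"
      by (rule contractible_iff_ccontr[OF finite_chs[OF finOP] po_chs])
    also have "\<dots> \<longleftrightarrow> ccontr OP (orbit_le (sdle leq))"
      by (rule ccontr_chs_iff[OF finOP po_OP])
    also have "\<dots> \<longleftrightarrow> contractible_space (poset_topology OP (orbit_le (sdle leq)))"
      by (rule contractible_iff_ccontr[OF finOP po_OP, symmetric])
    also have "\<dots> \<longleftrightarrow> P m" by (simp add: P_def orbit_space_def OP_def)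
    finally show ?thesis .
  qed
  have part1: "P k \<longleftrightarrow> P 1" if "k \<ge> 1" for k
    using that
  proof (induction k)
    case 0 then show ?case by simp
  next
    case (Suc k)
    show ?case
    proof (cases "k = 0")
      case True then show ?thesis by simp
    next
      case False
      then obtain m where m: "k = Suc m" by (cases k) auto
      have "P (Suc k) \<longleftrightarrow> P k" using step[OF PB[of m]] m by simp
      also have "\<dots> \<longleftrightarrow> P 1" using Suc.IH False by simp
      finally show ?thesis .
    qed
  qed
  have part2: "P 1 \<longleftrightarrow> contractible_space (orbit_space G act X leq)" if pb: "propB G X leq act"
  proof -
    have "propB G (sdiv 0 X leq) (sdle leq) (sdact act)" using pt_propB[OF pb] by simp
    then have "P 1 \<longleftrightarrow> P 0" using step[of 0] by simp
    also have "\<dots> \<longleftrightarrow> contractible_space (orbit_space G act X leq)"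
      using pt_iso[OF fgX] by (simp add: P_def)
    finally show ?thesis .
  qed
  show ?thesis using part1[OF assms(2)] part2 unfolding P_def by blast
qed

end
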